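(* Let $m\in\mathbb{N}$ and let $V_n$ ($n\in\mathbb{N}$) and $V$ be 1-periodic complex-valued distributions in $H_{+}^{-m}$ such that $V_n\to V$ in $H_{+}^{-m}$ as $n\to\infty$. Then the operators $S_{\pm}^{(n)}:=S_{\pm}(V_n)$ converge to $S_{\pm}:=S_{\pm}(V)$ in the uniform resolvent sense: for $\lambda$ in the resolvent set of $S_\pm$, $$\|R(\lambda,S_{\pm}^{(n)})-R(\lambda,S_{\pm})\|\to0,\qquad n\to\infty.$$
   Context: For $s\in\mathbb{R}$, $H_{+}^{s}$ is the space of formal series $f=\sum_{k\in\mathbb{Z}}\widehat f(2k)e^{i2k\pi x}$ with $\|f\|_{H_+^s}^2=\sum_k\langle 2k\rangle^{2s}|\widehat f(2k)|^2<\infty$, and $H_{-}^{s}$ is the space of formal series $f=\sum_{k}\widehat f(2k+1)e^{i(2k+1)\pi x}$ with $\|f\|_{H_-^s}^2=\sum_k\langle 2k+1\rangle^{2s}|\widehat f(2k+1)|^2<\infty$, where $\langle k\rangle=1+|k|$; $H_\pm^0=L_2(0,1)$. $\langle\cdot,\cdot\rangle_{\pm}$ is the pairing between $H_\pm^{s}$ and $H_\pm^{-s}$ extending the $L_2(0,1)$ inner product. $D_{\pm}=-i\,d/dx$ on $H_\pm^1$, $D_\pm^{2m}=|D_\pm|^{2m}$ (multiplication by $(n\pi)^{2m}$ on the mode $e^{in\pi x}$). For $W\in H_+^{-m}$ and $u\in H_\pm^{m}$, $W(x)u=\sum_n\big(\sum_j\widehat W(n-j)\widehat u(j)\big)e^{in\pi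 x}\in H_\pm^{-m}$. For $W\in H_+^{-m}$, $S_{\pm}(W)=D_{\pm}^{2m}\dotplus W$ is the $m$-sectorial operator on $L_2(0,1)$ associated with the closed sectorial form $\langle D_{\pm}^{2m}u,v\rangle_{\pm}+\langle W(x)u,v\rangle_{\pm}$ on $H_\pm^m$; explicitly $\mathrm{Dom}(S_{\pm}(W))=\{u\in H_{\pm}^{m}\mid D_{\pm}^{2m}u+W(x)u\in L_{2}(0,1)\}$, $S_\pm(W)u=D_{\pm}^{2m}u+W(x)u$. $R(\lambda,A)=(A-\lambda I)^{-1}$ denotes the resolvent. *)

theory Defs
  imports "HOL-Analysis.Analysis"
begin

text \<open>
  Everything is expressed on the Fourier side.  A formal series in H_+^s
  (resp. H_-^s) is represented by its coefficient sequence c :: int => complex,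
  where c k is the coefficient of the mode e^{i pi (freq s k) x}, with
  freq True k = 2k (the + case) and freq False k = 2k+1 (the - case).
  Since {e^{i 2k pi x}} and {e^{i(2k+1) pi x}} are orthonormal bases of
  L_2(0,1), H_pm^0 = L_2(0,1) is isometrically identified with l_2(Z).
  A potential W in H_+^{-m} is represented by w k = coefficient of e^{i 2k pi x}.
\<close>

definition freq :: "bool \<Rightarrow> int \<Rightarrow> int" where
  "freq pl k = (if pl then 2 * k else 2 * k + 1)"

definition bracket :: "int \<Rightarrow> real" where
  "bracket k = 1 + real_of_int \<bar>k\<bar>"

definition in_H :: "bool \<Rightarrow> real \<Rightarrow> (int \<Rightarrow> complex) \<Rightarrow> bool" where
  "in_H pl r u \<longleftrightarrow>
     (\<lambda>k. bracket (freq pl k) powr (2 * r) * (cmod (u k))\<^sup>2) summable_on (UNIV :: int set)"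

definition Hnorm :: "bool \<Rightarrow> real \<Rightarrow> (int \<Rightarrow> complex) \<Rightarrow> real" where
  "Hnorm pl r u = sqrt (\<Sum>\<^sub>\<infinity>k. bracket (freq pl k) powr (2 * r) * (cmod (u k))\<^sup>2)"

abbreviation L2 :: "bool \<Rightarrow> (int \<Rightarrow> complex) \<Rightarrow> bool" where
  "L2 pl u \<equiv> in_H pl 0 u"

abbreviation L2norm :: "bool \<Rightarrow> (int \<Rightarrow> complex) \<Rightarrow> real" where
  "L2norm pl u \<equiv> Hnorm pl 0 u"

text \<open>multiplication W(x)u: (Wu)^(n) = sum_j W^(n-j) u^(j); in coefficient
  indexing freq n - freq j = 2(n-j)\<close>
definition pot_mult :: "(int \<Rightarrow> complex) \<Rightarrow> (int \<Rightarrow> complex) \<Rightarrow> (int \<Rightarrow> complex)" where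
  "pot_mult w u = (\<lambda>n. \<Sum>\<^sub>\<infinity>j. w (n - j) * u j)"

definition S_expr :: "bool \<Rightarrow> nat \<Rightarrow> (int \<Rightarrow> complex) \<Rightarrow> (int \<Rightarrow> complex) \<Rightarrow> (int \<Rightarrow> complex)" where
  "S_expr pl m w u = (\<lambda>k. complex_of_real ((pi * real_of_int (freq pl k)) ^ (2 * m)) * u k
                          + pot_mult w u k)"

definition S_dom :: "bool \<Rightarrow> nat \<Rightarrow> (int \<Rightarrow> complex) \<Rightarrow> (int \<Rightarrow> complex) set" where
  "S_dom pl m w = {u. in_H pl (real m) u \<and> L2 pl (S_expr pl m w u)}"

definition resolvent_set :: "bool \<Rightarrow> nat \<Rightarrow> (int \<Rightarrow> complex) \<Rightarrow> complex set" where
  "resolvent_set pl m w = {lam.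
      (\<forall>f. L2 pl f \<longrightarrow> (\<exists>!u. u \<in> S_dom pl m w \<and> (\<lambda>k. S_expr pl m w u k - lam * u k) = f)) \<and>
      (\<exists>C. \<forall>f u. L2 pl f \<longrightarrow> u \<in> S_dom pl m w \<longrightarrow> (\<lambda>k. S_expr pl m w u k - lam * u k) = f
                \<longrightarrow> L2norm pl u \<le> C * L2norm pl f)}"

definition resolvent :: "bool \<Rightarrow> nat \<Rightarrow> (int \<Rightarrow> complex) \<Rightarrow> complex \<Rightarrow> (int \<Rightarrow> complex) \<Rightarrow> (int \<Rightarrow> complex)" where
  "resolvent pl m w lam f = (THE u. u \<in> S_dom pl m w \<and> (\<lambda>k. S_expr pl m w u k - lam * u k) = f)"

definition opnorm_diff :: "bool \<Rightarrow> ((int \<Rightarrow> complex) \<Rightarrow> (int \<Rightarrow> complex)) \<Rightarrow> ((int \<Rightarrow> complex) \<Rightarrow> (int \<Rightarrow> complex)) \<Rightarrow> real" where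
  "opnorm_diff pl A B = Sup {L2norm pl (\<lambda>k. A f k - B f k) | f. L2 pl f \<and> L2norm pl f \<le> 1}"

end

theory Submission
  imports Defs
begin

definition ws :: "(int \<Rightarrow> real) \<Rightarrow> (int \<Rightarrow> complex) \<Rightarrow> bool" where
  "ws \<omega> u \<longleftrightarrow> (\<lambda>k. \<omega> k * (cmod (u k))\<^sup>2) summable_on UNIV"

definition wn :: "(int \<Rightarrow> real) \<Rightarrow> (int \<Rightarrow> complex) \<Rightarrow> real" where
  "wn \<omega> u = sqrt (\<Sum>\<^sub>\<infinity>k. \<omega> k * (cmod (u k))\<^sup>2)"

lemma ws_bound:
  assumes pos: "\<And>k. \<omega> k \<ge> 0"
    and B: "\<And>F. finite F \<Longrightarrow> (\<Sum>k\<in>F. \<omega> k * (cmod (u k))\<^sup>2) \<le> B\<^sup>2" and "B \<ge> 0"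
  shows "ws \<omega> u" "wn \<omega> u \<le> B"
proof -
  have nn: "\<And>k. \<omega> k * (cmod (u k))\<^sup>2 \<ge> 0" using pos by simp
  show s: "ws \<omega> u" unfolding ws_def
    by (rule nonneg_bdd_above_summable_on) (use nn B in \<open>auto intro!: bdd_aboveI2\<close>)
  have "(\<Sum>\<^sub>\<infinity>k. \<omega> k * (cmod (u k))\<^sup>2) \<le> B\<^sup>2"
    by (rule infsum_le_finite_sums) (use s B in \<open>auto simp: ws_def\<close>)
  then show "wn \<omega> u \<le> B" unfolding wn_def
    using \<open>B \<ge> 0\<close> real_le_lsqrt infsum_nonneg nn by (metis real_sqrt_le_iff real_sqrt_unique) 
qed

lemma fin_le_wn:
  assumes pos: "\<And>k. \<omega> k \<ge> 0" and "ws \<omega> u" "finite F"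
  shows "(\<Sum>k\<in>F. \<omega> k * (cmod (u k))\<^sup>2) \<le> (wn \<omega> u)\<^sup>2"
proof -
  have nn: "\<And>k. \<omega> k * (cmod (u k))\<^sup>2 \<ge> 0" using pos by simp
  have "(\<Sum>k\<in>F. \<omega> k * (cmod (u k))\<^sup>2) \<le> (\<Sum>\<^sub>\<infinity>k. \<omega> k * (cmod (u k))\<^sup>2)"
    by (rule finite_sum_le_infsum) (use assms nn in \<open>auto simp: ws_def\<close>)
  also have "\<dots> = (wn \<omega> u)\<^sup>2" unfolding wn_def
    by (simp add: infsum_nonneg nn)
  finally show ?thesis .
qed

lemma wn_ge0: "(\<And>k. \<omega> k \<ge> 0) \<Longrightarrow> 0 \<le> wn \<omega> u"
  unfolding wn_def by (intro real_sqrt_ge_zero infsum_nonneg) simp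

lemma wn_pt:
  assumes pos: "\<And>k. \<omega> k \<ge> 0" and "ws \<omega> u"
  shows "\<omega> k * (cmod (u k))\<^sup>2 \<le> (wn \<omega> u)\<^sup>2"
  using fin_le_wn[OF pos assms(2), of "{k}"] by simp

lemma L2_eq:
  assumes "\<And>k. \<omega> k \<ge> 0"
  shows "L2_set (\<lambda>k. sqrt (\<omega> k) * cmod (u k)) F = sqrt (\<Sum>k\<in>F. \<omega> k * (cmod (u k))\<^sup>2)"
  unfolding L2_set_def using assms by (simp add: power_mult_distrib)

lemma ws_comp:
  assumes pos1: "\<And>k. \<omega>1 k \<ge> 0" and pos2: "\<And>k. \<omega>2 k \<ge> 0" and v: "ws \<omega>2 v" and c: "c \<ge> 0"
    and le: "\<And>k. \<omega>1 k * (cmod (u k))\<^sup>2 \<le> c\<^sup>2 * (\<omega>2 k * (cmod (v k))\<^sup>2)"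
  shows "ws \<omega>1 u" "wn \<omega>1 u \<le> c * wn \<omega>2 v"
proof -
  have "(\<Sum>k\<in>F. \<omega>1 k * (cmod (u k))\<^sup>2) \<le> (c * wn \<omega>2 v)\<^sup>2" if "finite F" for F
  proof -
    have "(\<Sum>k\<in>F. \<omega>1 k * (cmod (u k))\<^sup>2) \<le> (\<Sum>k\<in>F. c\<^sup>2 * (\<omega>2 k * (cmod (v k))\<^sup>2))"
      by (rule sum_mono) (rule le)
    also have "\<dots> = c\<^sup>2 * (\<Sum>k\<in>F. \<omega>2 k * (cmod (v k))\<^sup>2)" by (simp add: sum_distrib_left)
    also have "\<dots> \<le> c\<^sup>2 * (wn \<omega>2 v)\<^sup>2"
      by (rule mult_left_mono[OF fin_le_wn[OF pos2 v that]]) simp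
    finally show ?thesis by (simp add: power_mult_distrib)
  qed
  note fin = this
  have nn: "c * wn \<omega>2 v \<ge> 0" using c wn_ge0[OF pos2] by simp
  show "ws \<omega>1 u" "wn \<omega>1 u \<le> c * wn \<omega>2 v"
    using ws_bound[OF pos1 fin nn] by auto
qed

lemma ws_add:
  assumes pos: "\<And>k. \<omega> k \<ge> 0" and u: "ws \<omega> u" and v: "ws \<omega> v"
  shows "ws \<omega> (\<lambda>k. u k + v k)" "wn \<omega> (\<lambda>k. u k + v k) \<le> wn \<omega> u + wn \<omega> v"
proof -
  have "(\<Sum>k\<in>F. \<omega> k * (cmod (u k + v k))\<^sup>2) \<le> (wn \<omega> u + wn \<omega> v)\<^sup>2" if F: "finite F" for F
  proof -
    have "sqrt (\<Sum>k\<in>F. \<omega> k * (cmod (u k + v k))\<^sup>2) = L2_set (\<lambda>k. sqrt (\<omega> k) * cmod (u k + v k)) F"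
      by (simp add: L2_eq pos)
    also have "\<dots> \<le> L2_set (\<lambda>k. sqrt (\<omega> k) * cmod (u k) + sqrt (\<omega> k) * cmod (v k)) F"
    proof (rule L2_set_mono)
      fix i
      have "sqrt (\<omega> i) * cmod (u i + v i) \<le> sqrt (\<omega> i) * (cmod (u i) + cmod (v i))"
        by (rule mult_left_mono) (auto simp: norm_triangle_ineq pos)
      then show "sqrt (\<omega> i) * cmod (u i + v i) \<le> sqrt (\<omega> i) * cmod (u i) + sqrt (\<omega> i) * cmod (v i)"
        by (simp add: distrib_left)
      show "0 \<le> sqrt (\<omega> i) * cmod (u i + v i)" by (simp add: pos)
    qed
    also have "\<dots> \<le> L2_set (\<lambda>k. sqrt (\<omega> k) * cmod (u k)) F + L2_set (\<lambda>k. sqrt (\<omega> k) * cmod (v k)) F"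
      by (rule L2_set_triangle_ineq)
    also have "\<dots> \<le> wn \<omega> u + wn \<omega> v"
    proof -
      have a: "sqrt (\<Sum>k\<in>F. \<omega> k * (cmod (w k))\<^sup>2) \<le> wn \<omega> w" if "ws \<omega> w" for w
      proof -
        have "sqrt (\<Sum>k\<in>F. \<omega> k * (cmod (w k))\<^sup>2) \<le> sqrt ((wn \<omega> w)\<^sup>2)"
          by (rule real_sqrt_le_mono[OF fin_le_wn[OF pos that F]])
        also have "\<dots> = wn \<omega> w" using wn_ge0[OF pos] by simp
        finally show ?thesis .
      qed
      show ?thesis unfolding L2_eq[OF pos] using a[OF u] a[OF v] by simp
    qed
    finally have b: "sqrt (\<Sum>k\<in>F. \<omega> k * (cmod (u k + v k))\<^sup>2) \<le> wn \<omega> u + wn \<omega> v" .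
    have S0: "(\<Sum>k\<in>F. \<omega> k * (cmod (u k + v k))\<^sup>2) \<ge> 0"
      by (intro sum_nonneg mult_nonneg_nonneg) (simp_all add: pos)
    have "(\<Sum>k\<in>F. \<omega> k * (cmod (u k + v k))\<^sup>2) = (sqrt (\<Sum>k\<in>F. \<omega> k * (cmod (u k + v k))\<^sup>2))\<^sup>2"
      using S0 by simp
    also have "\<dots> \<le> (wn \<omega> u + wn \<omega> v)\<^sup>2"
      by (rule power_mono[OF b]) (simp add: S0)
    finally show ?thesis .
  qed
  note fin = this
  have nn: "wn \<omega> u + wn \<omega> v \<ge> 0" using wn_ge0[OF pos] by (simp add: add_nonneg_nonneg)
  show "ws \<omega> (\<lambda>k. u k + v k)" "wn \<omega> (\<lambda>k. u k + v k) \<le> wn \<omega> u + wn \<omega> v"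
    using ws_bound[OF pos fin nn] by auto
qed


lemma ws_zero: "ws \<omega> (\<lambda>_. 0)" "wn \<omega> (\<lambda>_. 0) = 0"
  by (simp_all add: ws_def wn_def)

lemma ws_cmult:
  assumes "ws \<omega> u" "\<And>k. \<omega> k \<ge> 0"
  shows "ws \<omega> (\<lambda>k. c * u k)" "wn \<omega> (\<lambda>k. c * u k) = cmod c * wn \<omega> u"
proof -
  have e: "(\<lambda>k. \<omega> k * (cmod (c * u k))\<^sup>2) = (\<lambda>k. (cmod c)\<^sup>2 * (\<omega> k * (cmod (u k))\<^sup>2))"
    by (simp add: norm_mult power_mult_distrib mult_ac)
  show "ws \<omega> (\<lambda>k. c * u k)" using assms(1) unfolding ws_def e by (rule summable_on_cmult_right)
  have "wn \<omega> (\<lambda>k. c * u k) = sqrt ((cmod c)\<^sup>2 * (\<Sum>\<^sub>\<infinity>k. \<omega> k * (cmod (u k))\<^sup>2))"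
    unfolding wn_def e by (simp add: infsum_cmult_right')
  also have "\<dots> = cmod c * wn \<omega> u" by (simp add: real_sqrt_mult wn_def)
  finally show "wn \<omega> (\<lambda>k. c * u k) = cmod c * wn \<omega> u" .
qed

lemma ws_uminus:
  assumes "ws \<omega> u"
  shows "ws \<omega> (\<lambda>k. - u k)" "wn \<omega> (\<lambda>k. - u k) = wn \<omega> u"
  using assms by (simp_all add: ws_def wn_def)

lemma ws_diff:
  assumes pos: "\<And>k. \<omega> k \<ge> 0" and u: "ws \<omega> u" and v: "ws \<omega> v"
  shows "ws \<omega> (\<lambda>k. u k - v k)" "wn \<omega> (\<lambda>k. u k - v k) \<le> wn \<omega> u + wn \<omega> v"
  using ws_add[OF pos u ws_uminus(1)[OF v]] ws_uminus(2)[OF v] by simp_all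

lemma wn_commute: "wn \<omega> (\<lambda>k. u k - v k) = wn \<omega> (\<lambda>k. v k - u k)"
  unfolding wn_def by (simp add: norm_minus_commute)

lemma ws_commute: "ws \<omega> (\<lambda>k. u k - v k) = ws \<omega> (\<lambda>k. v k - u k)"
  unfolding ws_def by (simp add: norm_minus_commute)

lemma wn_tri:
  assumes pos: "\<And>k. \<omega> k \<ge> 0" and "ws \<omega> a" "ws \<omega> b" "ws \<omega> c"
  shows "wn \<omega> (\<lambda>k. a k - b k) \<le> wn \<omega> (\<lambda>k. a k - c k) + wn \<omega> (\<lambda>k. c k - b k)"
proof -
  have "(\<lambda>k. a k - b k) = (\<lambda>k. (a k - c k) + (c k - b k))" by auto
  then show ?thesis using ws_add(2)[OF pos ws_diff(1)[OF pos assms(2,4)] ws_diff(1)[OF pos assms(4,3)]]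
    by simp
qed

lemma wn_pt2:
  assumes pos: "\<And>k. \<omega> k > 0" and "ws \<omega> u"
  shows "cmod (u k) \<le> wn \<omega> u / sqrt (\<omega> k)"
proof -
  have p: "\<And>k. \<omega> k \<ge> 0" using pos less_imp_le by blast
  have "\<omega> k * (cmod (u k))\<^sup>2 \<le> (wn \<omega> u)\<^sup>2" by (rule wn_pt[OF p assms(2)])
  then have "sqrt (\<omega> k * (cmod (u k))\<^sup>2) \<le> sqrt ((wn \<omega> u)\<^sup>2)" by (rule real_sqrt_le_mono)
  then have "sqrt (\<omega> k) * cmod (u k) \<le> wn \<omega> u"
    using wn_ge0[OF p] by (simp add: real_sqrt_mult)
  then show ?thesis using pos[of k] by (simp add: field_simps)
qed

lemma wn_eq0:
  assumes pos: "\<And>k. \<omega> k > 0" and "ws \<omega> u" "wn \<omega> u \<le> 0"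
  shows "u = (\<lambda>_. 0)"
proof
  fix k
  have "cmod (u k) \<le> wn \<omega> u / sqrt (\<omega> k)" by (rule wn_pt2[OF pos assms(2)])
  also have "\<dots> \<le> 0" using assms(3) pos[of k] by (simp add: divide_nonpos_pos)
  finally show "u k = 0" by simp
qed

lemma ws_eqI:
  assumes pos: "\<And>k. \<omega> k > 0" and "ws \<omega> (\<lambda>k. u k - v k)" "wn \<omega> (\<lambda>k. u k - v k) \<le> 0"
  shows "u = v"
  using wn_eq0[OF pos assms(2,3)] by (simp add: fun_eq_iff)


lemma contraction_fix:
  fixes \<Phi> :: "(int \<Rightarrow> complex) \<Rightarrow> (int \<Rightarrow> complex)"
  assumes pos: "\<And>k. \<omega> k > 0" and c: "0 \<le> c" "c < 1"
    and maps: "\<And>u. ws \<omega> u \<Longrightarrow> ws \<omega> (\<Phi> u)"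
    and lip: "\<And>u v. ws \<omega> u \<Longrightarrow> ws \<omega> v \<Longrightarrow> wn \<omega> (\<lambda>k. \<Phi> u k - \<Phi> v k) \<le> c * wn \<omega> (\<lambda>k. u k - v k)"
  shows "\<exists>!u. ws \<omega> u \<and> \<Phi> u = u"
proof -
  have p: "\<And>k. \<omega> k \<ge> 0" using pos less_imp_le by blast
  define s where "s i = (\<Phi> ^^ i) (\<lambda>_. 0)" for i
  have sS: "s (Suc i) = \<Phi> (s i)" for i by (simp add: s_def)
  have sws: "ws \<omega> (s i)" for i
    by (induction i) (simp_all add: s_def ws_zero maps)
  define d0 where "d0 = wn \<omega> (\<lambda>k. s 1 k - s 0 k)"
  have step: "wn \<omega> (\<lambda>k. s (Suc i) k - s i k) \<le> c ^ i * d0" for i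
  proof (induction i)
    case 0 then show ?case by (simp add: d0_def)
  next
    case (Suc i)
    have "wn \<omega> (\<lambda>k. s (Suc (Suc i)) k - s (Suc i) k) \<le> c * wn \<omega> (\<lambda>k. s (Suc i) k - s i k)"
      unfolding sS[of "Suc i"] unfolding sS[of i] using lip[OF maps[OF sws[of i]] sws[of i]]
      by (simp add: sS)
    also have "\<dots> \<le> c * (c ^ i * d0)" by (rule mult_left_mono[OF Suc c(1)])
    finally show ?case by simp
  qed
  have d0: "d0 \<ge> 0" unfolding d0_def by (rule wn_ge0[OF p])
  define E where "E k = d0 * c ^ k / (1 - c)" for k
  have tailp: "wn \<omega> (\<lambda>j. s (k + q) j - s k j) \<le> d0 * (c ^ k - c ^ (k + q)) / (1 - c)" for k q
  proof (induction q)
    case 0 then show ?case by (simp add: ws_zero)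
  next
    case (Suc q)
    have "wn \<omega> (\<lambda>j. s (k + Suc q) j - s k j) \<le> wn \<omega> (\<lambda>j. s (k + Suc q) j - s (k + q) j) + wn \<omega> (\<lambda>j. s (k + q) j - s k j)"
      by (rule wn_tri[OF p sws sws sws])
    also have "\<dots> \<le> c ^ (k + q) * d0 + d0 * (c ^ k - c ^ (k + q)) / (1 - c)"
      using step[of "k+q"] Suc by simp
    also have "\<dots> = d0 * (c ^ k - c ^ (k + Suc q)) / (1 - c)"
      using c by (simp add: field_simps)
    finally show ?case .
  qed
  have tail: "wn \<omega> (\<lambda>j. s l j - s k j) \<le> E k" if "k \<le> l" for k l
  proof -
    obtain q where l: "l = k + q" using \<open>k \<le> l\<close> le_Suc_ex by blast
    have "d0 * (c ^ k - c ^ (k + q)) / (1 - c) \<le> E k"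
      unfolding E_def using c d0 by (intro divide_right_mono mult_left_mono) auto
    then show ?thesis using tailp[of k q] l by simp
  qed
  have E0: "E \<longlonglongrightarrow> 0"
  proof -
    have "(\<lambda>k. d0 / (1 - c) * c ^ k) \<longlonglongrightarrow> d0 / (1 - c) * 0"
      by (intro tendsto_mult tendsto_const LIMSEQ_power_zero) (use c in auto)
    then show ?thesis unfolding E_def by (simp add: field_simps)
  qed
  have ptw: "cmod (s l j - s k j) \<le> E k / sqrt (\<omega> j)" if "k \<le> l" for k l j
  proof -
    have "cmod (s l j - s k j) \<le> wn \<omega> (\<lambda>j. s l j - s k j) / sqrt (\<omega> j)"
      using wn_pt2[OF pos ws_diff(1)[OF p sws sws]] by simp
    also have "\<dots> \<le> E k / sqrt (\<omega> j)"
      using tail[OF that] pos[of j] by (simp add: divide_right_mono)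
    finally show ?thesis .
  qed
  have conv: "convergent (\<lambda>i. s i j)" for j
  proof -
    have "Cauchy (\<lambda>i. s i j)"
    proof (rule metric_CauchyI)
      fix e :: real assume e: "e > 0"
      have "(\<lambda>k. E k / sqrt (\<omega> j)) \<longlonglongrightarrow> 0 / sqrt (\<omega> j)"
        by (intro tendsto_divide E0 tendsto_const) (use pos[of j] in auto)
      then have "\<forall>\<^sub>F k in sequentially. E k / sqrt (\<omega> j) < e / 2"
        using e by (intro order_tendstoD) auto
      then obtain M where M: "\<And>k. k \<ge> M \<Longrightarrow> E k / sqrt (\<omega> j) < e / 2"
        by (auto simp: eventually_sequentially)
      show "\<exists>M. \<forall>m\<ge>M. \<forall>n\<ge>M. dist (s m j) (s n j) < e"
      proof (intro exI allI impI)
        fix a b assume "a \<ge> M" "b \<ge> M"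
        have "dist (s a j) (s b j) \<le> dist (s a j) (s M j) + dist (s b j) (s M j)"
          by (rule dist_triangle2)
        also have "\<dots> \<le> E M / sqrt (\<omega> j) + E M / sqrt (\<omega> j)"
          using add_mono[OF ptw[OF \<open>a \<ge> M\<close>, of j] ptw[OF \<open>b \<ge> M\<close>, of j]] by (simp add: dist_norm)
        also have "\<dots> < e" using M[of M] by (simp add: mult.commute)
        finally show "dist (s a j) (s b j) < e" .
      qed
    qed
    then show ?thesis by (simp add: Cauchy_convergent_iff)
  qed
  define U where "U j = lim (\<lambda>i. s i j)" for j
  have U: "(\<lambda>i. s i j) \<longlonglongrightarrow> U j" for j
    using conv[of j] unfolding U_def by (simp add: convergent_LIMSEQ_iff)
  have UE: "ws \<omega> (\<lambda>j. U j - s k j) \<and> wn \<omega> (\<lambda>j. U j - s k j) \<le> E k" for k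
  proof -
    have Ek: "E k \<ge> 0" unfolding E_def using c d0 by simp
    have "(\<Sum>j\<in>F. \<omega> j * (cmod (U j - s k j))\<^sup>2) \<le> (E k)\<^sup>2" if F: "finite F" for F
    proof (rule LIMSEQ_le_const2)
      show "(\<lambda>l. \<Sum>j\<in>F. \<omega> j * (cmod (s l j - s k j))\<^sup>2) \<longlonglongrightarrow> (\<Sum>j\<in>F. \<omega> j * (cmod (U j - s k j))\<^sup>2)"
        by (intro tendsto_sum tendsto_mult tendsto_const tendsto_power tendsto_norm tendsto_diff U)
      show "\<exists>N. \<forall>l\<ge>N. (\<Sum>j\<in>F. \<omega> j * (cmod (s l j - s k j))\<^sup>2) \<le> (E k)\<^sup>2"
      proof (intro exI allI impI)
        fix l assume "l \<ge> k"
        have "(\<Sum>j\<in>F. \<omega> j * (cmod (s l j - s k j))\<^sup>2) \<le> (wn \<omega> (\<lambda>j. s l j - s k j))\<^sup>2"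
          by (rule fin_le_wn[OF p ws_diff(1)[OF p sws sws] F])
        also have "\<dots> \<le> (E k)\<^sup>2"
          by (rule power_mono[OF tail[OF \<open>l \<ge> k\<close>]]) (rule wn_ge0[OF p])
        finally show "(\<Sum>j\<in>F. \<omega> j * (cmod (s l j - s k j))\<^sup>2) \<le> (E k)\<^sup>2" .
      qed
    qed
    note fin = this
    show ?thesis using ws_bound[OF p fin Ek] by simp
  qed
  have Uws: "ws \<omega> U"
  proof -
    have "U = (\<lambda>j. (U j - s 0 j) + s 0 j)" by simp
    then show ?thesis using ws_add(1)[OF p conjunct1[OF UE[of 0]] sws[of 0]] by simp
  qed
  have fixU: "\<Phi> U = U"
  proof (rule ws_eqI[OF pos])
    show "ws \<omega> (\<lambda>k. \<Phi> U k - U k)" by (rule ws_diff(1)[OF p maps[OF Uws] Uws])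
    have bnd: "wn \<omega> (\<lambda>k. \<Phi> U k - U k) \<le> c * E k + E (Suc k)" for k
    proof -
      have "wn \<omega> (\<lambda>j. \<Phi> U j - U j) \<le> wn \<omega> (\<lambda>j. \<Phi> U j - \<Phi> (s k) j) + wn \<omega> (\<lambda>j. \<Phi> (s k) j - U j)"
        by (rule wn_tri[OF p maps[OF Uws] Uws maps[OF sws]])
      also have "\<dots> \<le> c * wn \<omega> (\<lambda>j. U j - s k j) + wn \<omega> (\<lambda>j. U j - s (Suc k) j)"
        using lip[OF Uws sws[of k]] wn_commute[of \<omega> "\<Phi> (s k)" U] by (simp add: sS)
      also have "\<dots> \<le> c * E k + E (Suc k)"
        using UE[of k] UE[of "Suc k"] c by (intro add_mono mult_left_mono) auto
      finally show ?thesis .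
    qed
    have lim: "(\<lambda>k. c * E k + E (Suc k)) \<longlonglongrightarrow> c * 0 + 0"
      by (intro tendsto_intros E0 filterlim_compose[OF E0 filterlim_Suc])
    have "wn \<omega> (\<lambda>k. \<Phi> U k - U k) \<le> c * 0 + 0"
      by (rule tendsto_lowerbound[OF lim]) (simp_all add: bnd always_eventually)
    then show "wn \<omega> (\<lambda>k. \<Phi> U k - U k) \<le> 0" by simp
  qed
  show ?thesis
  proof (rule ex1I[of _ U])
    show "ws \<omega> U \<and> \<Phi> U = U" using Uws fixU by simp
    fix v assume v: "ws \<omega> v \<and> \<Phi> v = v"
    show "v = U"
    proof (rule ws_eqI[OF pos])
      show ws1: "ws \<omega> (\<lambda>k. v k - U k)" using ws_diff(1)[OF p _ Uws] v by blast
      have "wn \<omega> (\<lambda>k. v k - U k) \<le> c * wn \<omega> (\<lambda>k. v k - U k)"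
        using lip[of v U] v Uws fixU by simp
      then have "(1 - c) * wn \<omega> (\<lambda>k. v k - U k) \<le> 0" by (simp add: algebra_simps)
      then show "wn \<omega> (\<lambda>k. v k - U k) \<le> 0" using c by (simp add: mult_le_0_iff)
    qed
  qed
qed


definition bp :: "bool \<Rightarrow> int \<Rightarrow> real" where "bp pl k = bracket (freq pl k)"
definition wP :: "bool \<Rightarrow> nat \<Rightarrow> int \<Rightarrow> real" where "wP pl m k = bp pl k ^ (2*m)"
definition wN :: "bool \<Rightarrow> nat \<Rightarrow> int \<Rightarrow> real" where "wN pl m k = 1 / bp pl k ^ (2*m)"
definition w1 :: "int \<Rightarrow> real" where "w1 k = 1"

lemma bp_ge1: "bp pl k \<ge> 1" by (simp add: bp_def bracket_def)
lemma bp_pos: "bp pl k > 0" using bp_ge1[of pl k] by linarith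
lemma bp_ge: "bp pl k \<ge> 1 + \<bar>real_of_int k\<bar>"
proof -
  have "\<bar>k\<bar> \<le> \<bar>freq pl k\<bar>" by (simp add: freq_def) arith
  then have "\<bar>real_of_int k\<bar> \<le> \<bar>real_of_int (freq pl k)\<bar>" by (metis of_int_abs of_int_le_iff)
  then show ?thesis by (simp add: bp_def bracket_def)
qed
lemma bracket_ne0[simp]: "bracket x \<noteq> 0" by (simp add: bracket_def)
lemma wP_pos: "wP pl m k > 0" by (simp add: wP_def bp_pos)
lemma wN_pos: "wN pl m k > 0" by (simp add: wN_def bp_pos)
lemma w1_pos: "w1 k > 0" by (simp add: w1_def)
lemma wP_ge: "wP pl m k \<ge> 0" by (simp add: less_imp_le wP_pos)
lemma wN_ge: "wN pl m k \<ge> 0" by (simp add: less_imp_le wN_pos)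
lemma w1_ge: "w1 k \<ge> 0" by (simp add: w1_def)
lemma wP_ge1: "wP pl m k \<ge> 1" unfolding wP_def using bp_ge1 one_le_power by blast

lemma powr_pos_eq: "bracket (freq pl k) powr (2 * real m) = wP pl m k"
proof -
  have "bracket (freq pl k) powr (2 * real m) = bracket (freq pl k) powr (real (2*m))" by simp
  also have "\<dots> = wP pl m k" using bp_pos[of pl k] by (simp only: powr_realpow wP_def bp_def)
  finally show ?thesis .
qed

lemma powr_neg_eq: "bracket (freq pl k) powr (2 * (- real m)) = wN pl m k"
proof -
  have "bracket (freq pl k) powr (2 * (- real m)) = inverse (bracket (freq pl k) powr (2 * real m))"
    by (simp add: powr_minus[symmetric])
  then show ?thesis by (simp add: powr_pos_eq wN_def wP_def divide_inverse)
qed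

lemma powr_neg_eq': "bracket (freq pl k) powr (- (2 * real m)) = wN pl m k"
  using powr_neg_eq[of pl k m] by simp

lemma inH_pos: "in_H pl (real m) u = ws (wP pl m) u" "Hnorm pl (real m) u = wn (wP pl m) u"
  by (simp_all add: in_H_def Hnorm_def ws_def wn_def powr_pos_eq)
lemma inH_neg: "in_H pl (- real m) u = ws (wN pl m) u" "Hnorm pl (- real m) u = wn (wN pl m) u"
  by (simp_all add: in_H_def Hnorm_def ws_def wn_def powr_neg_eq powr_neg_eq')
lemma inH_0: "in_H pl 0 u = ws w1 u" "Hnorm pl 0 u = wn w1 u"
  by (simp_all add: in_H_def Hnorm_def ws_def wn_def w1_def)

lemma freq_diff: "freq pl n - freq pl j = freq True (n - j)"
  by (simp add: freq_def)

lemma K1: "bp True (n - j) \<le> bp pl n * bp pl j"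
proof -
  have "bp True (n - j) = 1 + \<bar>real_of_int (freq pl n - freq pl j)\<bar>"
    by (simp add: bp_def bracket_def freq_diff)
  also have "\<dots> \<le> (1 + \<bar>real_of_int (freq pl n)\<bar>) * (1 + \<bar>real_of_int (freq pl j)\<bar>)"
    by (simp add: algebra_simps) (smt (verit) abs_ge_zero mult_nonneg_nonneg)
  finally show ?thesis by (simp add: bp_def bracket_def)
qed

lemma K2: "bp True (n - j) \<le> bp pl n + bp pl j"
proof -
  have "bp True (n - j) = 1 + \<bar>real_of_int (freq pl n - freq pl j)\<bar>"
    by (simp add: bp_def bracket_def freq_diff)
  also have "\<dots> \<le> (1 + \<bar>real_of_int (freq pl n)\<bar>) + (1 + \<bar>real_of_int (freq pl j)\<bar>)"
    by simp
  finally show ?thesis by (simp add: bp_def bracket_def)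
qed

lemma pow_sum_le: fixes a b :: real assumes "a \<ge> 0" "b \<ge> 0"
  shows "(a + b) ^ m \<le> 2 ^ m * (a ^ m + b ^ m)"
proof -
  have "(a + b) ^ m \<le> (2 * max a b) ^ m" by (rule power_mono) (use assms in auto)
  also have "\<dots> = 2 ^ m * max a b ^ m" by (simp add: power_mult_distrib)
  also have "max a b ^ m \<le> a ^ m + b ^ m"
    using assms by (cases "a \<le> b") (auto simp: max_def)
  then have "2 ^ m * max a b ^ m \<le> 2 ^ m * (a ^ m + b ^ m)" by simp
  finally show ?thesis .
qed

lemma K3: "bp True (n - j) ^ m \<le> 2 ^ m * (bp pl n ^ m + bp pl j ^ m)"
proof -
  have "bp True (n - j) ^ m \<le> (bp pl n + bp pl j) ^ m"
    by (rule power_mono[OF K2]) (simp add: less_imp_le bp_pos)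
  also have "\<dots> \<le> 2 ^ m * (bp pl n ^ m + bp pl j ^ m)"
    by (rule pow_sum_le) (simp_all add: less_imp_le bp_pos)
  finally show ?thesis .
qed

lemma K1m: "bp True (n - j) ^ m \<le> bp pl n ^ m * bp pl j ^ m"
  by (metis K1 power_mono power_mult_distrib less_imp_le bp_pos)

subsection \<open>zeta bound\<close>

lemma zeta_bound: "\<exists>Z. \<forall>S. finite S \<longrightarrow> (\<Sum>n\<in>S. 1 / (1 + \<bar>real_of_int n\<bar>)\<^sup>2) \<le> Z"
proof -
  define g where "g k = inverse (real (Suc k) ^ 2)" for k :: nat
  have s0: "summable (\<lambda>n. inverse (real n ^ 2))"
    by (rule inverse_power_summable) simp
  have sg: "summable g"
    unfolding g_def by (rule iffD2[OF summable_Suc_iff[of "\<lambda>n. inverse (real n ^ 2)"] s0])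
  have gnn: "\<And>k. g k \<ge> 0" by (simp add: g_def)
  define Z where "Z = 2 * suminf g"
  have "(\<Sum>n\<in>S. 1 / (1 + \<bar>real_of_int n\<bar>)\<^sup>2) \<le> Z" if S: "finite S" for S
  proof -
    define S1 where "S1 = {n\<in>S. n \<ge> 0}"
    define S2 where "S2 = {n\<in>S. n < 0}"
    have fin: "finite S1" "finite S2" using S by (simp_all add: S1_def S2_def)
    have split: "S = S1 \<union> S2" "S1 \<inter> S2 = {}" by (auto simp: S1_def S2_def)
    have e1: "(\<Sum>n\<in>S1. 1 / (1 + \<bar>real_of_int n\<bar>)\<^sup>2) = (\<Sum>k\<in>nat ` S1. g k)"
    proof -
      have inj: "inj_on nat S1" by (auto simp: inj_on_def S1_def)
      have "(\<Sum>k\<in>nat ` S1. g k) = (\<Sum>n\<in>S1. g (nat n))" by (rule sum.reindex[OF inj, unfolded comp_def])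
      also have "\<dots> = (\<Sum>n\<in>S1. 1 / (1 + \<bar>real_of_int n\<bar>)\<^sup>2)"
        by (rule sum.cong) (auto simp: S1_def g_def divide_inverse add.commute)
      finally show ?thesis by simp
    qed
    have e2: "(\<Sum>n\<in>S2. 1 / (1 + \<bar>real_of_int n\<bar>)\<^sup>2) = (\<Sum>k\<in>(\<lambda>n. nat (- n)) ` S2. g k)"
    proof -
      have inj: "inj_on (\<lambda>n. nat (- n)) S2" by (auto simp: inj_on_def S2_def)
      have "(\<Sum>k\<in>(\<lambda>n. nat (- n)) ` S2. g k) = (\<Sum>n\<in>S2. g (nat (- n)))"
        by (rule sum.reindex[OF inj, unfolded comp_def])
      also have "\<dots> = (\<Sum>n\<in>S2. 1 / (1 + \<bar>real_of_int n\<bar>)\<^sup>2)"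
      proof (rule sum.cong)
        fix n assume "n \<in> S2"
        then have "n < 0" by (simp add: S2_def)
        then have a: "real (nat (- n)) = real_of_int (- n)" by simp
        have "real (Suc (nat (- n))) = 1 + \<bar>real_of_int n\<bar>"
        proof -
          have b: "real (Suc (nat (- n))) = 1 + real_of_int (- n)" by (simp only: of_nat_Suc a)
          have c: "\<bar>real_of_int n\<bar> = - real_of_int n" using \<open>n < 0\<close> by simp
          show ?thesis unfolding b c by simp
        qed
        then show "g (nat (- n)) = 1 / (1 + \<bar>real_of_int n\<bar>)\<^sup>2"
          unfolding g_def by (simp add: divide_inverse)
      qed simp
      finally show ?thesis by simp
    qed
    have "(\<Sum>n\<in>S. 1 / (1 + \<bar>real_of_int n\<bar>)\<^sup>2) = (\<Sum>n\<in>S1. 1 / (1 + \<bar>real_of_int n\<bar>)\<^sup>2) + (\<Sum>n\<in>S2. 1 / (1 + \<bar>real_of_int n\<bar>)\<^sup>2)"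
      using split fin by (simp add: sum.union_disjoint)
    also have "\<dots> \<le> suminf g + suminf g"
      unfolding e1 e2
      by (intro add_mono sum_le_suminf[OF sg]) (use fin gnn in auto)
    finally show ?thesis by (simp add: Z_def)
  qed
  then show ?thesis by blast
qed

lemma bpw_le: assumes "m \<ge> 1" shows "1 / bp pl n ^ (2*m) \<le> 1 / (1 + \<bar>real_of_int n\<bar>)\<^sup>2"
proof -
  have "(1 + \<bar>real_of_int n\<bar>)\<^sup>2 \<le> bp pl n ^ 2" by (rule power_mono[OF bp_ge]) simp
  also have "\<dots> \<le> bp pl n ^ (2*m)" by (rule power_increasing) (use assms bp_ge1 in auto)
  finally show ?thesis by (intro divide_left_mono) (auto simp: bp_pos)
qed

lemma fin_limit:
  fixes g :: "int \<Rightarrow> int \<Rightarrow> complex"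
  assumes F: "finite F" and sm: "\<And>n. n \<in> F \<Longrightarrow> g n summable_on UNIV"
    and bnd: "\<And>G. finite G \<Longrightarrow> (\<Sum>n\<in>F. c n * (cmod (\<Sum>j\<in>G. g n j))\<^sup>2) \<le> B"
  shows "(\<Sum>n\<in>F. c n * (cmod (infsum (g n) UNIV))\<^sup>2) \<le> B"
proof -
  have lim: "((\<lambda>G. \<Sum>n\<in>F. c n * (cmod (\<Sum>j\<in>G. g n j))\<^sup>2) \<longlongrightarrow> (\<Sum>n\<in>F. c n * (cmod (infsum (g n) UNIV))\<^sup>2)) (finite_subsets_at_top UNIV)"
  proof (intro tendsto_sum tendsto_mult tendsto_const tendsto_power tendsto_norm)
    fix n assume "n \<in> F"
    then show "((\<lambda>G. \<Sum>j\<in>G. g n j) \<longlongrightarrow> infsum (g n) UNIV) (finite_subsets_at_top UNIV)"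
      using sm has_sum_infsum unfolding has_sum_def by blast
  qed
  show ?thesis
    by (rule tendsto_upperbound[OF lim]) (auto intro!: eventually_finite_subsets_at_top_weakI bnd)
qed

lemma sum_shift1:
  fixes h :: "int \<Rightarrow> real"
  assumes "finite G" "\<And>S. finite S \<Longrightarrow> sum h S \<le> A"
  shows "(\<Sum>j\<in>G. h (n - j)) \<le> A"
proof -
  have inj: "inj_on (\<lambda>j. n - j) G" by (auto simp: inj_on_def)
  have "(\<Sum>j\<in>G. h (n - j)) = sum h ((\<lambda>j. n - j) ` G)"
    by (simp add: sum.reindex[OF inj] comp_def)
  also have "\<dots> \<le> A" using assms by simp
  finally show ?thesis .
qed

lemma sum_shift2:
  fixes h :: "int \<Rightarrow> real"
  assumes "finite F" "\<And>S. finite S \<Longrightarrow> sum h S \<le> A"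
  shows "(\<Sum>n\<in>F. h (n - j)) \<le> A"
proof -
  have inj: "inj_on (\<lambda>n. n - j) F" by (auto simp: inj_on_def)
  have "(\<Sum>n\<in>F. h (n - j)) = sum h ((\<lambda>n. n - j) ` F)"
    by (simp add: sum.reindex[OF inj] comp_def)
  also have "\<dots> \<le> A" using assms by simp
  finally show ?thesis .
qed


lemma bp_ne0[simp]: "bp pl k \<noteq> 0" using bp_pos[of pl k] by simp

lemma four_pow: "((2::real) ^ m)\<^sup>2 = 4 ^ m"
  by (induction m) (simp_all add: power2_eq_square algebra_simps)

lemma four_pow2: "(4::real) ^ m = 2 ^ (m * 2)"
  by (simp only: power_mult four_pow)

lemma T1_bound:
  fixes a U :: "int \<Rightarrow> real"
  assumes F: "finite F" and G: "finite G" and a0: "\<And>k. a k \<ge> 0" and U0: "\<And>j. U j \<ge> 0"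
    and hA: "\<And>S. finite S \<Longrightarrow> (\<Sum>k\<in>S. (a k)\<^sup>2) \<le> A"
  shows "(\<Sum>n\<in>F. (\<Sum>j\<in>G. a (n - j) * U j)\<^sup>2) \<le> (\<Sum>j\<in>G. U j)\<^sup>2 * A"
proof -
  have cs: "(\<Sum>j\<in>G. a (n - j) * U j)\<^sup>2 \<le> (\<Sum>j\<in>G. (a (n - j))\<^sup>2 * U j) * (\<Sum>j\<in>G. U j)" for n
  proof -
    have "(\<Sum>j\<in>G. a (n - j) * U j)\<^sup>2 = (\<Sum>j\<in>G. (a (n - j) * sqrt (U j)) * sqrt (U j))\<^sup>2"
      by (simp add: U0 mult.assoc)
    also have "\<dots> \<le> (\<Sum>j\<in>G. (a (n - j) * sqrt (U j))\<^sup>2) * (\<Sum>j\<in>G. (sqrt (U j))\<^sup>2)"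
      by (rule Cauchy_Schwarz_ineq_sum)
    also have "\<dots> = (\<Sum>j\<in>G. (a (n - j))\<^sup>2 * U j) * (\<Sum>j\<in>G. U j)"
      by (simp add: power_mult_distrib U0)
    finally show ?thesis .
  qed
  have "(\<Sum>n\<in>F. (\<Sum>j\<in>G. a (n - j) * U j)\<^sup>2) \<le> (\<Sum>n\<in>F. (\<Sum>j\<in>G. (a (n - j))\<^sup>2 * U j) * (\<Sum>j\<in>G. U j))"
    by (rule sum_mono) (rule cs)
  also have "\<dots> = (\<Sum>j\<in>G. U j) * (\<Sum>j\<in>G. U j * (\<Sum>n\<in>F. (a (n - j))\<^sup>2))"
    by (simp add: sum_distrib_left sum_distrib_right sum.swap[of _ F G] mult_ac)
  also have "\<dots> \<le> (\<Sum>j\<in>G. U j) * (\<Sum>j\<in>G. U j * A)"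
    by (intro mult_left_mono sum_mono sum_nonneg U0 sum_shift2[OF F hA]) 
  also have "\<dots> = (\<Sum>j\<in>G. U j)\<^sup>2 * A"
    by (simp only: sum_distrib_right[symmetric]) (simp add: power2_eq_square)
  finally show ?thesis .
qed

lemma T2_bound:
  fixes a bb c :: "int \<Rightarrow> real"
  assumes F: "finite F" and G: "finite G"
    and hA: "\<And>S. finite S \<Longrightarrow> (\<Sum>k\<in>S. (a k)\<^sup>2) \<le> A"
    and hB: "(\<Sum>j\<in>G. (bb j)\<^sup>2) \<le> B" and A0: "A \<ge> 0"
    and hZ: "(\<Sum>n\<in>F. (c n)\<^sup>2) \<le> Z"
  shows "(\<Sum>n\<in>F. (c n * (\<Sum>j\<in>G. a (n - j) * bb j))\<^sup>2) \<le> Z * A * B"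
proof -
  have B0: "B \<ge> 0" using hB by (smt (verit) sum_nonneg zero_le_power2)
  have "(c n * (\<Sum>j\<in>G. a (n - j) * bb j))\<^sup>2 \<le> (c n)\<^sup>2 * (A * B)" for n
  proof -
    have "(\<Sum>j\<in>G. a (n - j) * bb j)\<^sup>2 \<le> A * B"
      by (rule order.trans[OF Cauchy_Schwarz_ineq_sum])
        (intro mult_mono sum_shift1[OF G hA] hB A0 sum_nonneg, simp_all)
    then show ?thesis by (simp add: power_mult_distrib mult_left_mono)
  qed
  then have "(\<Sum>n\<in>F. (c n * (\<Sum>j\<in>G. a (n - j) * bb j))\<^sup>2) \<le> (\<Sum>n\<in>F. (c n)\<^sup>2 * (A * B))"
    by (rule sum_mono)
  also have "\<dots> = (\<Sum>n\<in>F. (c n)\<^sup>2) * (A * B)" by (simp add: sum_distrib_right)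
  also have "\<dots> \<le> Z * (A * B)" by (rule mult_right_mono[OF hZ]) (simp add: A0 B0)
  finally show ?thesis by (simp add: mult_ac)
qed


lemma mult_est:
  fixes x u :: "int \<Rightarrow> complex"
  assumes m: "m \<ge> 1" and x: "ws (wN True m) x" and u: "ws (wP pl m) u"
    and Z: "\<And>S. finite S \<Longrightarrow> (\<Sum>n\<in>S. 1 / (1 + \<bar>real_of_int n\<bar>)\<^sup>2) \<le> Z"
  shows "(\<lambda>j. x (n - j) * u j) summable_on UNIV"
    and "ws (wN pl m) (pot_mult x u)"
    and "wn (wN pl m) (pot_mult x u) \<le> 2 ^ (m+1) * sqrt Z * wn (wN True m) x * wn (wP pl m) u"
proof -
  define A where "A = (wn (wN True m) x)\<^sup>2"
  define B where "B = (wn (wP pl m) u)\<^sup>2"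
  define a where "a k = cmod (x k) / bp True k ^ m" for k
  define U where "U j = cmod (u j)" for j
  define bb where "bb j = bp pl j ^ m * U j" for j
  define c where "c n = 1 / bp pl n ^ m" for n
  have a0: "a k \<ge> 0" for k by (simp add: a_def bp_pos less_imp_le)
  have U0: "U j \<ge> 0" for j by (simp add: U_def)
  have bb0: "bb j \<ge> 0" for j by (simp add: bb_def U0 bp_pos less_imp_le)
  have c0: "c n \<ge> 0" for n by (simp add: c_def bp_pos less_imp_le)
  have A0: "A \<ge> 0" and B0: "B \<ge> 0" by (simp_all add: A_def B_def)
  have Z0: "Z \<ge> 0" using Z[of "{}"] by simp
  have hA: "(\<Sum>k\<in>S. (a k)\<^sup>2) \<le> A" if "finite S" for S
  proof -
    have "(\<Sum>k\<in>S. (a k)\<^sup>2) = (\<Sum>k\<in>S. wN True m k * (cmod (x k))\<^sup>2)"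
      by (rule sum.cong) (simp_all add: a_def wN_def power_divide power_mult[symmetric] mult.commute)
    also have "\<dots> \<le> A" unfolding A_def by (rule fin_le_wn[OF wN_ge x that])
    finally show ?thesis .
  qed
  have hB: "(\<Sum>k\<in>S. (bb k)\<^sup>2) \<le> B" if "finite S" for S
  proof -
    have "(\<Sum>k\<in>S. (bb k)\<^sup>2) = (\<Sum>k\<in>S. wP pl m k * (cmod (u k))\<^sup>2)"
      by (rule sum.cong) (simp_all add: bb_def U_def wP_def power_mult_distrib power_mult[symmetric] mult.commute)
    also have "\<dots> \<le> B" unfolding B_def by (rule fin_le_wn[OF wP_ge u that])
    finally show ?thesis .
  qed
  have hZ: "(\<Sum>n\<in>S. (c n)\<^sup>2) \<le> Z" if "finite S" for S
  proof -
    have "(\<Sum>n\<in>S. (c n)\<^sup>2) \<le> (\<Sum>n\<in>S. 1 / (1 + \<bar>real_of_int n\<bar>)\<^sup>2)"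
    proof (rule sum_mono)
      fix n
      have cc: "(c n)\<^sup>2 = 1 / bp pl n ^ (2*m)"
        by (simp add: c_def power_divide power_mult[symmetric] mult.commute)
      show "(c n)\<^sup>2 \<le> 1 / (1 + \<bar>real_of_int n\<bar>)\<^sup>2" unfolding cc by (rule bpw_le[OF m])
    qed
    also have "\<dots> \<le> Z" by (rule Z[OF that])
    finally show ?thesis .
  qed
  have xa: "cmod (x k) = a k * bp True k ^ m" for k by (simp add: a_def bp_pos)
  have cbp: "c n * bp pl n ^ m = 1" for n by (simp add: c_def bp_pos)
  have Ubb: "U j = c j * bb j" for j by (simp add: c_def bb_def bp_pos)
  have ps: "(\<Sum>j\<in>G. cmod (x (n - j) * u j)) \<le> bp pl n ^ m * ((A + B) / 2)" if G: "finite G" for G n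
  proof -
    have "cmod (x (n - j) * u j) \<le> bp pl n ^ m * (((a (n - j))\<^sup>2 + (bb j)\<^sup>2) / 2)" for j
    proof -
      have "cmod (x (n - j) * u j) = a (n - j) * bp True (n - j) ^ m * U j"
        by (simp add: norm_mult xa U_def)
      also have "\<dots> \<le> a (n - j) * (bp pl n ^ m * bp pl j ^ m) * U j"
        by (intro mult_right_mono mult_left_mono K1m a0 U0)
      also have "\<dots> = bp pl n ^ m * (a (n - j) * bb j)" by (simp add: bb_def mult_ac)
      also have "\<dots> \<le> bp pl n ^ m * (((a (n - j))\<^sup>2 + (bb j)\<^sup>2) / 2)"
        by (intro mult_left_mono) (use sum_squares_bound[of "a (n - j)" "bb j"] in \<open>simp_all add: bp_pos less_imp_le mult_ac\<close>)
      finally show ?thesis .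
    qed
    then have "(\<Sum>j\<in>G. cmod (x (n - j) * u j)) \<le> (\<Sum>j\<in>G. bp pl n ^ m * (((a (n - j))\<^sup>2 + (bb j)\<^sup>2) / 2))"
      by (rule sum_mono)
    also have "\<dots> = bp pl n ^ m * (\<Sum>j\<in>G. ((a (n - j))\<^sup>2 + (bb j)\<^sup>2) / 2)"
      by (rule sum_distrib_left[symmetric])
    also have "\<dots> = bp pl n ^ m * (((\<Sum>j\<in>G. (a (n - j))\<^sup>2) + (\<Sum>j\<in>G. (bb j)\<^sup>2)) / 2)"
      by (simp only: sum_divide_distrib[symmetric] sum.distrib)
    also have "\<dots> \<le> bp pl n ^ m * ((A + B) / 2)"
      by (intro mult_left_mono divide_right_mono add_mono sum_shift1[OF G hA] hB G) (simp_all add: bp_pos less_imp_le)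
    finally show ?thesis .
  qed
  have summ: "(\<lambda>j. x (n - j) * u j) summable_on UNIV" for n
  proof -
    have "(\<lambda>j. norm (x (n - j) * u j)) summable_on UNIV"
      by (rule nonneg_bdd_above_summable_on) (auto intro!: bdd_aboveI2[where M="bp pl n ^ m * ((A + B) / 2)"] ps)
    then show ?thesis by (rule abs_summable_summable)
  qed
  then show "(\<lambda>j. x (n - j) * u j) summable_on UNIV" .
  have main: "(\<Sum>n\<in>F. wN pl m n * (cmod (\<Sum>j\<in>G. x (n - j) * u j))\<^sup>2) \<le> 4 ^ (m+1) * Z * A * B"
    if F: "finite F" and G: "finite G" for F G
  proof -
    define T1 where "T1 n = (\<Sum>j\<in>G. a (n - j) * U j)" for n
    define T2 where "T2 n = c n * (\<Sum>j\<in>G. a (n - j) * bb j)" for n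
    have pt: "c n * (cmod (x (n - j)) * U j) \<le> 2 ^ m * (a (n - j) * U j + c n * (a (n - j) * bb j))" for n j
    proof -
      have "c n * (cmod (x (n - j)) * U j) = c n * a (n - j) * U j * bp True (n - j) ^ m"
        by (simp add: xa mult_ac)
      also have "\<dots> \<le> c n * a (n - j) * U j * (2 ^ m * (bp pl n ^ m + bp pl j ^ m))"
        by (intro mult_left_mono K3 mult_nonneg_nonneg c0 a0 U0)
      also have "\<dots> = 2 ^ m * (a (n - j) * U j * (c n * bp pl n ^ m) + c n * (a (n - j) * (bp pl j ^ m * U j)))"
        by (simp add: algebra_simps)
      also have "\<dots> = 2 ^ m * (a (n - j) * U j + c n * (a (n - j) * bb j))"
        by (simp add: cbp bb_def)
      finally show ?thesis .
    qed
    have step: "wN pl m n * (cmod (\<Sum>j\<in>G. x (n - j) * u j))\<^sup>2 \<le> 2 * 4 ^ m * ((T1 n)\<^sup>2 + (T2 n)\<^sup>2)" for n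
    proof -
      have "cmod (\<Sum>j\<in>G. x (n - j) * u j) \<le> (\<Sum>j\<in>G. cmod (x (n - j)) * U j)"
        by (rule order.trans[OF norm_sum]) (simp add: norm_mult U_def)
      then have "c n * cmod (\<Sum>j\<in>G. x (n - j) * u j) \<le> c n * (\<Sum>j\<in>G. cmod (x (n - j)) * U j)"
        by (rule mult_left_mono[OF _ c0])
      also have "\<dots> = (\<Sum>j\<in>G. c n * (cmod (x (n - j)) * U j))" by (simp add: sum_distrib_left)
      also have "\<dots> \<le> (\<Sum>j\<in>G. 2 ^ m * (a (n - j) * U j + c n * (a (n - j) * bb j)))"
        by (rule sum_mono) (rule pt)
      also have "\<dots> = 2 ^ m * (\<Sum>j\<in>G. a (n - j) * U j + c n * (a (n - j) * bb j))"
        by (rule sum_distrib_left[symmetric])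
      also have "\<dots> = 2 ^ m * ((\<Sum>j\<in>G. a (n - j) * U j) + (\<Sum>j\<in>G. c n * (a (n - j) * bb j)))"
        by (simp only: sum.distrib)
      also have "\<dots> = 2 ^ m * ((\<Sum>j\<in>G. a (n - j) * U j) + c n * (\<Sum>j\<in>G. a (n - j) * bb j))"
        by (simp only: sum_distrib_left)
      also have "\<dots> = 2 ^ m * (T1 n + T2 n)"
        by (simp add: T1_def T2_def)
      finally have le: "c n * cmod (\<Sum>j\<in>G. x (n - j) * u j) \<le> 2 ^ m * (T1 n + T2 n)" .
      have "wN pl m n * (cmod (\<Sum>j\<in>G. x (n - j) * u j))\<^sup>2 = (c n * cmod (\<Sum>j\<in>G. x (n - j) * u j))\<^sup>2"
        by (simp add: wN_def c_def power_divide power_mult[symmetric] power_mult_distrib mult.commute)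
      also have "\<dots> \<le> (2 ^ m * (T1 n + T2 n))\<^sup>2"
        by (rule power_mono[OF le]) (simp add: c0)
      also have "\<dots> = 4 ^ m * (T1 n + T2 n)\<^sup>2"
        by (simp only: power_mult_distrib four_pow)
      also have "\<dots> \<le> 4 ^ m * (2 * ((T1 n)\<^sup>2 + (T2 n)\<^sup>2))"
        by (intro mult_left_mono) (use sum_squares_bound[of "T1 n" "T2 n"] in \<open>simp_all add: power2_sum\<close>)
      finally show ?thesis by (simp add: algebra_simps)
    qed
    have sU: "(\<Sum>j\<in>G. U j)\<^sup>2 \<le> Z * B"
    proof -
      have "(\<Sum>j\<in>G. U j)\<^sup>2 = (\<Sum>j\<in>G. c j * bb j)\<^sup>2" by (simp add: Ubb)
      also have "\<dots> \<le> (\<Sum>j\<in>G. (c j)\<^sup>2) * (\<Sum>j\<in>G. (bb j)\<^sup>2)" by (rule Cauchy_Schwarz_ineq_sum)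
      also have "\<dots> \<le> Z * B" by (intro mult_mono hZ hB G Z0 sum_nonneg) simp_all
      finally show ?thesis .
    qed
    have "(\<Sum>n\<in>F. wN pl m n * (cmod (\<Sum>j\<in>G. x (n - j) * u j))\<^sup>2) \<le> (\<Sum>n\<in>F. 2 * 4 ^ m * ((T1 n)\<^sup>2 + (T2 n)\<^sup>2))"
      by (rule sum_mono) (rule step)
    also have "\<dots> = 2 * 4 ^ m * ((\<Sum>n\<in>F. (T1 n)\<^sup>2) + (\<Sum>n\<in>F. (T2 n)\<^sup>2))"
      by (simp only: sum_distrib_left[symmetric] sum.distrib)
    also have "\<dots> \<le> 2 * 4 ^ m * ((\<Sum>j\<in>G. U j)\<^sup>2 * A + Z * A * B)"
      unfolding T1_def T2_def
      by (intro mult_left_mono add_mono T1_bound[OF F G a0 U0 hA] T2_bound[OF F G hA hB[OF G] A0 hZ[OF F]]) simp_all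
    also have "\<dots> \<le> 2 * 4 ^ m * (Z * B * A + Z * A * B)"
      by (intro mult_left_mono add_mono mult_right_mono sU A0) (simp_all add: Z0 A0)
    also have "\<dots> = 4 ^ (m+1) * Z * A * B" by (simp add: algebra_simps)
    finally show ?thesis .
  qed
  have lim: "(\<Sum>n\<in>F. wN pl m n * (cmod (pot_mult x u n))\<^sup>2) \<le> (2 ^ (m+1) * sqrt Z * wn (wN True m) x * wn (wP pl m) u)\<^sup>2"
    if F: "finite F" for F
  proof -
    have "(\<Sum>n\<in>F. wN pl m n * (cmod (pot_mult x u n))\<^sup>2) \<le> 4 ^ (m+1) * Z * A * B"
      unfolding pot_mult_def
      by (rule fin_limit[OF F summ main[OF F]])
    also have "\<dots> = (2 ^ (m+1) * sqrt Z * wn (wN True m) x * wn (wP pl m) u)\<^sup>2"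
      using Z0 by (simp add: A_def B_def power_mult_distrib power_mult[symmetric] mult.commute power_even_eq four_pow2)
    finally show ?thesis .
  qed
  have nn: "0 \<le> 2 ^ (m+1) * sqrt Z * wn (wN True m) x * wn (wP pl m) u"
    using Z0 wn_ge0[OF wN_ge] wn_ge0[OF wP_ge] by simp
  show "ws (wN pl m) (pot_mult x u)"
    and "wn (wN pl m) (pot_mult x u) \<le> 2 ^ (m+1) * sqrt Z * wn (wN True m) x * wn (wP pl m) u"
    using ws_bound[OF wN_ge lim nn] by auto
qed


lemma infsum_diff':
  fixes f g :: "'a \<Rightarrow> complex"
  assumes "f summable_on A" "g summable_on A"
  shows "infsum (\<lambda>x. f x - g x) A = infsum f A - infsum g A"
proof -
  have "infsum (\<lambda>x. f x + - g x) A = infsum f A + infsum (\<lambda>x. - g x) A"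
    by (rule infsum_add[OF assms(1) summable_on_uminus[THEN iffD2, OF assms(2)]])
  then show ?thesis by (simp add: infsum_uminus)
qed

lemma pm_diff:
  assumes "\<And>n. (\<lambda>j. x (n - j) * u j) summable_on UNIV" "\<And>n. (\<lambda>j. x (n - j) * v j) summable_on UNIV"
  shows "pot_mult x (\<lambda>j. u j - v j) = (\<lambda>n. pot_mult x u n - pot_mult x v n)"
  unfolding pot_mult_def using infsum_diff'[OF assms(1) assms(2)] by (simp add: right_diff_distrib)

lemma pm_wadd:
  assumes "\<And>n. (\<lambda>j. x (n - j) * u j) summable_on UNIV" "\<And>n. (\<lambda>j. y (n - j) * u j) summable_on UNIV"
  shows "pot_mult (\<lambda>k. x k + y k) u = (\<lambda>n. pot_mult x u n + pot_mult y u n)"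
  unfolding pot_mult_def using infsum_add[OF assms(1) assms(2)] by (simp add: distrib_right)

lemma pm_wdiff:
  assumes "\<And>n. (\<lambda>j. x (n - j) * u j) summable_on UNIV" "\<And>n. (\<lambda>j. y (n - j) * u j) summable_on UNIV"
  shows "pot_mult (\<lambda>k. x k - y k) u = (\<lambda>n. pot_mult x u n - pot_mult y u n)"
  unfolding pot_mult_def using infsum_diff'[OF assms(1) assms(2)] by (simp add: left_diff_distrib)

lemma pm_scale: "pot_mult x (\<lambda>j. c * u j) = (\<lambda>n. c * pot_mult x u n)"
  unfolding pot_mult_def by (simp add: infsum_cmult_right'[symmetric] mult_ac)

lemma pm_zero: "pot_mult x (\<lambda>j. 0) = (\<lambda>n. 0)"
  unfolding pot_mult_def by simp

lemma fin_support_le: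
  fixes h :: "int \<Rightarrow> real"
  assumes "finite F0" "\<And>k. k \<notin> F0 \<Longrightarrow> h k = 0" "\<And>k. h k \<ge> 0" "finite S"
  shows "sum h S \<le> sum h F0"
proof -
  have "sum h S = sum h (S \<inter> F0)"
    by (rule sum.mono_neutral_right) (use assms in auto)
  also have "\<dots> \<le> sum h F0" by (rule sum_mono2) (use assms in auto)
  finally show ?thesis .
qed

lemma low_est:
  fixes cc u :: "int \<Rightarrow> complex"
  assumes F0: "finite F0" and supp: "\<And>k. k \<notin> F0 \<Longrightarrow> cc k = 0"
    and u: "ws w1 u" and summ: "\<And>n. (\<lambda>j. cc (n - j) * u j) summable_on UNIV"
  shows "ws w1 (pot_mult cc u)" "wn w1 (pot_mult cc u) \<le> (\<Sum>k\<in>F0. cmod (cc k)) * wn w1 u"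
proof -
  define L where "L = (\<Sum>k\<in>F0. cmod (cc k))"
  define p where "p k = cmod (cc k)" for k
  define U where "U j = cmod (u j)" for j
  define B where "B = (wn w1 u)\<^sup>2"
  have p0: "p k \<ge> 0" for k by (simp add: p_def)
  have U0: "U k \<ge> 0" for k by (simp add: U_def)
  have L0: "L \<ge> 0" by (simp add: L_def sum_nonneg)
  have hL: "sum p S \<le> L" if "finite S" for S
    unfolding L_def p_def by (rule fin_support_le[OF F0 _ _ that]) (simp_all add: supp)
  have hB: "(\<Sum>j\<in>S. (U j)\<^sup>2) \<le> B" if "finite S" for S
    using fin_le_wn[OF w1_ge u that] by (simp add: B_def U_def w1_def)
  have main: "(\<Sum>n\<in>F. w1 n * (cmod (\<Sum>j\<in>G. cc (n - j) * u j))\<^sup>2) \<le> L\<^sup>2 * B"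
    if F: "finite F" and G: "finite G" for F G
  proof -
    have st: "w1 n * (cmod (\<Sum>j\<in>G. cc (n - j) * u j))\<^sup>2 \<le> L * (\<Sum>j\<in>G. p (n - j) * (U j)\<^sup>2)" for n
    proof -
      have "cmod (\<Sum>j\<in>G. cc (n - j) * u j) \<le> (\<Sum>j\<in>G. p (n - j) * U j)"
        by (rule order.trans[OF norm_sum]) (simp add: norm_mult p_def U_def)
      then have "(cmod (\<Sum>j\<in>G. cc (n - j) * u j))\<^sup>2 \<le> (\<Sum>j\<in>G. p (n - j) * U j)\<^sup>2"
        by (rule power_mono) simp
      also have "(\<Sum>j\<in>G. p (n - j) * U j)\<^sup>2 = (\<Sum>j\<in>G. sqrt (p (n - j)) * (sqrt (p (n - j)) * U j))\<^sup>2"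
        by (simp add: p0 mult.assoc[symmetric])
      also have "\<dots> \<le> (\<Sum>j\<in>G. (sqrt (p (n - j)))\<^sup>2) * (\<Sum>j\<in>G. (sqrt (p (n - j)) * U j)\<^sup>2)"
        by (rule Cauchy_Schwarz_ineq_sum)
      also have "\<dots> = (\<Sum>j\<in>G. p (n - j)) * (\<Sum>j\<in>G. p (n - j) * (U j)\<^sup>2)"
        by (simp add: p0 power_mult_distrib)
      also have "\<dots> \<le> L * (\<Sum>j\<in>G. p (n - j) * (U j)\<^sup>2)"
        by (intro mult_right_mono sum_shift1[OF G hL] sum_nonneg mult_nonneg_nonneg p0) simp_all
      finally show ?thesis by (simp add: w1_def)
    qed
    have "(\<Sum>n\<in>F. w1 n * (cmod (\<Sum>j\<in>G. cc (n - j) * u j))\<^sup>2) \<le> (\<Sum>n\<in>F. L * (\<Sum>j\<in>G. p (n - j) * (U j)\<^sup>2))"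
      by (rule sum_mono) (rule st)
    also have "\<dots> = L * (\<Sum>j\<in>G. (U j)\<^sup>2 * (\<Sum>n\<in>F. p (n - j)))"
      by (simp add: sum_distrib_left sum_distrib_right sum.swap[of _ F G] mult_ac)
    also have "\<dots> \<le> L * (\<Sum>j\<in>G. (U j)\<^sup>2 * L)"
      by (intro mult_left_mono sum_mono L0 sum_shift2[OF F hL]) simp_all
    also have "\<dots> = L\<^sup>2 * (\<Sum>j\<in>G. (U j)\<^sup>2)"
      by (simp only: sum_distrib_right[symmetric]) (simp add: power2_eq_square)
    also have "\<dots> \<le> L\<^sup>2 * B" by (intro mult_left_mono hB G) simp
    finally show ?thesis .
  qed
  have lim: "(\<Sum>n\<in>F. w1 n * (cmod (pot_mult cc u n))\<^sup>2) \<le> (L * wn w1 u)\<^sup>2" if F: "finite F" for F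
  proof -
    have "(\<Sum>n\<in>F. w1 n * (cmod (pot_mult cc u n))\<^sup>2) \<le> L\<^sup>2 * B"
      unfolding pot_mult_def by (rule fin_limit[OF F summ main[OF F]])
    then show ?thesis by (simp add: B_def power_mult_distrib)
  qed
  have nn: "0 \<le> L * wn w1 u" using L0 wn_ge0[OF w1_ge] by simp
  show "ws w1 (pot_mult cc u)" "wn w1 (pot_mult cc u) \<le> (\<Sum>k\<in>F0. cmod (cc k)) * wn w1 u"
    using ws_bound[OF w1_ge lim nn] by (auto simp: L_def)
qed

subsection \<open>the diagonal part\<close>

definition dd :: "bool \<Rightarrow> nat \<Rightarrow> int \<Rightarrow> real" where
  "dd pl m k = (pi * real_of_int (freq pl k)) ^ (2 * m)"

lemma dd_ge: "dd pl m k \<ge> 0" by (simp add: dd_def power_mult)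

lemma bp_dd: "bp pl k ^ (2*m) \<le> 4 ^ m * (1 + dd pl m k)"
proof -
  define t where "t = \<bar>real_of_int (freq pl k)\<bar>"
  have t0: "t \<ge> 0" by (simp add: t_def)
  have "bp pl k ^ (2*m) = (1 + t) ^ (2*m)" by (simp add: bp_def bracket_def t_def)
  also have "\<dots> \<le> 2 ^ (2*m) * (1 ^ (2*m) + t ^ (2*m))" by (rule pow_sum_le) (simp_all add: t0)
  also have "\<dots> \<le> 4 ^ m * (1 + dd pl m k)"
  proof -
    have "t ^ (2*m) \<le> (pi * t) ^ (2*m)"
      by (rule power_mono) (use t0 pi_gt3 in \<open>auto intro: mult_right_mono[of 1 pi t, simplified]\<close>)
    also have "\<dots> = dd pl m k"
      by (simp add: dd_def t_def power_mult_distrib power_mult power2_abs)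
    finally have "t ^ (2*m) \<le> dd pl m k" .
    moreover have "(2::real) ^ (2*m) = 4 ^ m" by (simp add: four_pow2 mult.commute)
    ultimately show ?thesis by simp
  qed
  finally show ?thesis .
qed

definition Qm :: "bool \<Rightarrow> nat \<Rightarrow> real \<Rightarrow> (int \<Rightarrow> complex) \<Rightarrow> (int \<Rightarrow> complex)" where
  "Qm pl m \<mu> g = (\<lambda>k. g k / complex_of_real (dd pl m k + \<mu>))"

lemma Q1:
  assumes mu: "\<mu> \<ge> 1" and g: "ws (wN pl m) g"
  shows "ws (wP pl m) (Qm pl m \<mu> g)" "wn (wP pl m) (Qm pl m \<mu> g) \<le> 4 ^ m * wn (wN pl m) g"
proof -
  have le: "wP pl m k * (cmod (Qm pl m \<mu> g k))\<^sup>2 \<le> (4 ^ m)\<^sup>2 * (wN pl m k * (cmod (g k))\<^sup>2)" for k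
  proof -
    define t where "t = bp pl k ^ (2*m)"
    define s where "s = dd pl m k + \<mu>"
    have t0: "t > 0" by (simp add: t_def bp_pos)
    have s0: "s > 0" using dd_ge[of pl m k] mu by (simp add: s_def)
    have ts: "t \<le> 4 ^ m * s" unfolding t_def s_def
      by (rule order.trans[OF bp_dd], rule mult_left_mono) (use mu in auto)
    have "t * t \<le> (4 ^ m * s) * (4 ^ m * s)" by (rule mult_mono[OF ts ts]) (use t0 s0 in auto)
    then have r: "t / s\<^sup>2 \<le> (4 ^ m)\<^sup>2 * (1 / t)"
      using t0 s0 by (simp add: field_simps power2_eq_square)
    have "wP pl m k * (cmod (Qm pl m \<mu> g k))\<^sup>2 = t / s\<^sup>2 * (cmod (g k))\<^sup>2"
    proof -
      have ns: "cmod (Qm pl m \<mu> g k) = cmod (g k) / s"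
        using s0 unfolding Qm_def s_def by (simp add: norm_divide del: of_real_add)
      show ?thesis by (simp add: ns wP_def t_def power_divide)
    qed
    also have "\<dots> \<le> (4 ^ m)\<^sup>2 * (1 / t) * (cmod (g k))\<^sup>2" by (rule mult_right_mono[OF r]) simp
    also have "\<dots> = (4 ^ m)\<^sup>2 * (wN pl m k * (cmod (g k))\<^sup>2)" by (simp add: wN_def t_def)
    finally show ?thesis .
  qed
  show "ws (wP pl m) (Qm pl m \<mu> g)" "wn (wP pl m) (Qm pl m \<mu> g) \<le> 4 ^ m * wn (wN pl m) g"
    using ws_comp[OF wP_ge wN_ge g _ le] by simp_all
qed

lemma Q2:
  assumes mu: "\<mu> \<ge> 1" and g: "ws w1 g"
  shows "ws (wP pl m) (Qm pl m \<mu> g)" "wn (wP pl m) (Qm pl m \<mu> g) \<le> 2 ^ m / sqrt \<mu> * wn w1 g"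
proof -
  have le: "wP pl m k * (cmod (Qm pl m \<mu> g k))\<^sup>2 \<le> (2 ^ m / sqrt \<mu>)\<^sup>2 * (w1 k * (cmod (g k))\<^sup>2)" for k
  proof -
    define t where "t = bp pl k ^ (2*m)"
    define s where "s = dd pl m k + \<mu>"
    have t0: "t > 0" by (simp add: t_def bp_pos)
    have s0: "s > 0" using dd_ge[of pl m k] mu by (simp add: s_def)
    have ts: "t \<le> 4 ^ m * s" unfolding t_def s_def
      by (rule order.trans[OF bp_dd], rule mult_left_mono) (use mu in auto)
    have ms: "\<mu> \<le> s" using dd_ge[of pl m k] by (simp add: s_def)
    have "t * \<mu> \<le> (4 ^ m * s) * s" by (rule mult_mono[OF ts ms]) (use mu s0 in auto)
    then have r: "t / s\<^sup>2 \<le> 4 ^ m / \<mu>"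
      using t0 s0 mu by (simp add: field_simps power2_eq_square)
    have e: "(2 ^ m / sqrt \<mu>)\<^sup>2 = 4 ^ m / \<mu>"
      using mu by (simp add: power_divide four_pow)
    have "wP pl m k * (cmod (Qm pl m \<mu> g k))\<^sup>2 = t / s\<^sup>2 * (cmod (g k))\<^sup>2"
    proof -
      have ns: "cmod (Qm pl m \<mu> g k) = cmod (g k) / s"
        using s0 unfolding Qm_def s_def by (simp add: norm_divide del: of_real_add)
      show ?thesis by (simp add: ns wP_def t_def power_divide)
    qed
    also have "\<dots> \<le> 4 ^ m / \<mu> * (cmod (g k))\<^sup>2" by (rule mult_right_mono[OF r]) simp
    also have "\<dots> = (2 ^ m / sqrt \<mu>)\<^sup>2 * (w1 k * (cmod (g k))\<^sup>2)" by (simp add: e w1_def)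
    finally show ?thesis .
  qed
  show "ws (wP pl m) (Qm pl m \<mu> g)" "wn (wP pl m) (Qm pl m \<mu> g) \<le> 2 ^ m / sqrt \<mu> * wn w1 g"
    using ws_comp[OF wP_ge w1_ge g _ le] mu by simp_all
qed

lemma L2_le_Hm: "ws (wP pl m) u \<Longrightarrow> ws w1 u \<and> wn w1 u \<le> wn (wP pl m) u"
proof -
  assume u: "ws (wP pl m) u"
  have "w1 k * (cmod (u k))\<^sup>2 \<le> 1\<^sup>2 * (wP pl m k * (cmod (u k))\<^sup>2)" for k
    using mult_right_mono[OF wP_ge1[of pl m k], of "(cmod (u k))\<^sup>2"] by (simp add: w1_def)
  then show ?thesis using ws_comp[OF w1_ge wP_ge u, of 1] by simp
qed

lemma Hneg_le_L2: "ws w1 u \<Longrightarrow> ws (wN pl m) u \<and> wn (wN pl m) u \<le> wn w1 u"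
proof -
  assume u: "ws w1 u"
  have "wN pl m k * (cmod (u k))\<^sup>2 \<le> 1\<^sup>2 * (w1 k * (cmod (u k))\<^sup>2)" for k
  proof -
    have "wN pl m k \<le> 1" using wP_ge1[of pl m k] by (simp add: wN_def wP_def)
    then show ?thesis by (simp add: w1_def) (rule mult_left_le_one_le, simp_all add: wN_ge)
  qed
  then show ?thesis using ws_comp[OF wN_ge w1_ge u, of 1] by simp
qed


definition trunc :: "int set \<Rightarrow> (int \<Rightarrow> complex) \<Rightarrow> int \<Rightarrow> complex" where
  "trunc F0 W k = (if k \<in> F0 then W k else 0)"

lemma S_expr_dd: "S_expr pl m X u k = complex_of_real (dd pl m k) * u k + pot_mult X u k"
  by (simp add: S_expr_def dd_def)

lemma trunc_ws:
  assumes F0: "finite F0" and W: "ws (wN True m) W"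
  shows "ws (wN True m) (trunc F0 W)"
proof -
  define B where "B = (\<Sum>k\<in>F0. wN True m k * (cmod (W k))\<^sup>2)"
  have B0: "B \<ge> 0" by (simp add: B_def sum_nonneg wN_ge)
  have "(\<Sum>k\<in>S. wN True m k * (cmod (trunc F0 W k))\<^sup>2) \<le> (sqrt B)\<^sup>2" if "finite S" for S
  proof -
    have "(\<Sum>k\<in>S. wN True m k * (cmod (trunc F0 W k))\<^sup>2) \<le> (\<Sum>k\<in>F0. wN True m k * (cmod (trunc F0 W k))\<^sup>2)"
      by (rule fin_support_le[OF F0 _ _ that]) (simp_all add: trunc_def wN_ge)
    also have "\<dots> = B" unfolding B_def by (rule sum.cong) (simp_all add: trunc_def)
    finally show ?thesis using B0 by simp
  qed
  note fin = this
  show ?thesis by (rule ws_bound(1)[OF wN_ge fin real_sqrt_ge_zero[OF B0]])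
qed

locale setting =
  fixes pl :: bool and m :: nat and W :: "int \<Rightarrow> complex"
    and Z :: real and F0 :: "int set" and \<delta>0 :: real and \<mu> :: real
  assumes m1: "m \<ge> 1"
    and Wws: "ws (wN True m) W"
    and Zb: "\<And>S. finite S \<Longrightarrow> (\<Sum>n\<in>S. 1 / (1 + \<bar>real_of_int n\<bar>)\<^sup>2) \<le> Z"
    and F0: "finite F0"
    and d0pos: "\<delta>0 \<ge> 0"
    and d0small: "4 ^ m * (2 ^ (m+1) * sqrt Z) * (2 * \<delta>0) \<le> 1/4"
    and tail: "wn (wN True m) (\<lambda>k. W k - trunc F0 W k) \<le> \<delta>0"
    and mu1: "\<mu> \<ge> 1"
    and musmall: "2 ^ m / sqrt \<mu> * (\<Sum>k\<in>F0. cmod (W k)) \<le> 1/4"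
begin

definition CM where "CM = 2 ^ (m+1) * sqrt Z"

definition good where "good X \<longleftrightarrow> ws (wN True m) X \<and> wn (wN True m) (\<lambda>k. X k - W k) \<le> \<delta>0"

lemma Z0: "Z \<ge> 0" using Zb[of "{}"] by simp
lemma CM0: "CM \<ge> 0" by (simp add: CM_def Z0)

lemma good_W: "good W" by (simp add: good_def Wws d0pos wn_def)

lemma msumm: "ws (wN True m) X \<Longrightarrow> ws (wP pl m) z \<Longrightarrow> (\<lambda>j. X (n - j) * z j) summable_on UNIV"
  by (rule mult_est(1)[OF m1 _ _ Zb])

lemma mws: "ws (wN True m) X \<Longrightarrow> ws (wP pl m) z \<Longrightarrow>
   ws (wN pl m) (pot_mult X z) \<and> wn (wN pl m) (pot_mult X z) \<le> CM * wn (wN True m) X * wn (wP pl m) z"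
  using mult_est(2,3)[OF m1 _ _ Zb, of X pl z] unfolding CM_def by simp

abbreviation Q where "Q \<equiv> Qm pl m \<mu>"

lemma Q_add: "Q (\<lambda>n. a n + b n) = (\<lambda>k. Q a k + Q b k)"
  by (simp add: Qm_def add_divide_distrib)
lemma Q_diff: "Q (\<lambda>n. a n - b n) = (\<lambda>k. Q a k - Q b k)"
  by (simp add: Qm_def diff_divide_distrib)

lemma C1:
  assumes X: "good X" and z: "ws (wP pl m) z"
  shows "ws (wP pl m) (Q (pot_mult X z))" "wn (wP pl m) (Q (pot_mult X z)) \<le> 1/2 * wn (wP pl m) z"
proof -
  define Xl where "Xl = trunc F0 W"
  define Xh where "Xh = (\<lambda>k. X k - Xl k)"
  have Xws: "ws (wN True m) X" using X by (simp add: good_def)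
  have Xlws: "ws (wN True m) Xl" unfolding Xl_def by (rule trunc_ws[OF F0 Wws])
  have Xhws: "ws (wN True m) Xh" unfolding Xh_def by (rule ws_diff(1)[OF wN_ge Xws Xlws])
  have Xeq: "X = (\<lambda>k. Xl k + Xh k)" by (simp add: Xh_def)
  have pe: "pot_mult X z = (\<lambda>n. pot_mult Xl z n + pot_mult Xh z n)"
    by (subst Xeq, rule pm_wadd[OF msumm[OF Xlws z] msumm[OF Xhws z]])
  have zl: "ws w1 z" "wn w1 z \<le> wn (wP pl m) z" using L2_le_Hm[OF z] by auto
  have lo: "ws w1 (pot_mult Xl z)" "wn w1 (pot_mult Xl z) \<le> (\<Sum>k\<in>F0. cmod (Xl k)) * wn w1 z"
    by (rule low_est[OF F0 _ zl(1) msumm[OF Xlws z]], simp add: Xl_def trunc_def)+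
  have Lsum: "(\<Sum>k\<in>F0. cmod (Xl k)) = (\<Sum>k\<in>F0. cmod (W k))"
    by (rule sum.cong) (simp_all add: Xl_def trunc_def)
  have L0: "(\<Sum>k\<in>F0. cmod (W k)) \<ge> 0" by (simp add: sum_nonneg)
  have q2: "ws (wP pl m) (Q (pot_mult Xl z))" "wn (wP pl m) (Q (pot_mult Xl z)) \<le> 2 ^ m / sqrt \<mu> * wn w1 (pot_mult Xl z)"
    using Q2[OF mu1 lo(1)] by auto
  have b1: "wn (wP pl m) (Q (pot_mult Xl z)) \<le> 1/4 * wn (wP pl m) z"
  proof -
    have "wn (wP pl m) (Q (pot_mult Xl z)) \<le> 2 ^ m / sqrt \<mu> * ((\<Sum>k\<in>F0. cmod (W k)) * wn (wP pl m) z)"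
      using q2(2) lo(2) zl(2) L0 mu1 unfolding Lsum
      by (smt (verit, ccfv_SIG) divide_nonneg_pos mult_left_mono real_sqrt_gt_zero zero_le_power)
    also have "\<dots> = (2 ^ m / sqrt \<mu> * (\<Sum>k\<in>F0. cmod (W k))) * wn (wP pl m) z" by simp
    also have "\<dots> \<le> 1/4 * wn (wP pl m) z" by (rule mult_right_mono[OF musmall wn_ge0[OF wP_ge]])
    finally show ?thesis .
  qed
  have hi: "ws (wN pl m) (pot_mult Xh z)" "wn (wN pl m) (pot_mult Xh z) \<le> CM * wn (wN True m) Xh * wn (wP pl m) z"
    using mws[OF Xhws z] by auto
  have Xhs: "wn (wN True m) Xh \<le> 2 * \<delta>0"
  proof -
    have "wn (wN True m) Xh \<le> wn (wN True m) (\<lambda>k. X k - W k) + wn (wN True m) (\<lambda>k. W k - Xl k)"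
      unfolding Xh_def by (rule wn_tri[OF wN_ge Xws Xlws Wws])
    also have "\<dots> \<le> \<delta>0 + \<delta>0" using X tail by (intro add_mono) (simp_all add: good_def Xl_def)
    finally show ?thesis by simp
  qed
  have q1: "ws (wP pl m) (Q (pot_mult Xh z))" "wn (wP pl m) (Q (pot_mult Xh z)) \<le> 4 ^ m * wn (wN pl m) (pot_mult Xh z)"
    using Q1[OF mu1 hi(1)] by auto
  have b2: "wn (wP pl m) (Q (pot_mult Xh z)) \<le> 1/4 * wn (wP pl m) z"
  proof -
    have "wn (wP pl m) (Q (pot_mult Xh z)) \<le> 4 ^ m * (CM * (2 * \<delta>0) * wn (wP pl m) z)"
    proof -
      have "CM * wn (wN True m) Xh * wn (wP pl m) z \<le> CM * (2 * \<delta>0) * wn (wP pl m) z"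
        by (intro mult_right_mono mult_left_mono Xhs CM0 wn_ge0[OF wP_ge])
      then show ?thesis using q1(2) hi(2) by (smt (verit) mult_left_mono zero_le_power)
    qed
    also have "\<dots> = (4 ^ m * CM * (2 * \<delta>0)) * wn (wP pl m) z" by (simp add: mult_ac)
    also have "\<dots> \<le> 1/4 * wn (wP pl m) z"
      by (rule mult_right_mono[OF _ wn_ge0[OF wP_ge]]) (use d0small in \<open>simp add: CM_def mult_ac\<close>)
    finally show ?thesis .
  qed
  have e: "Q (pot_mult X z) = (\<lambda>k. Q (pot_mult Xl z) k + Q (pot_mult Xh z) k)"
    unfolding pe by (rule Q_add)
  show "ws (wP pl m) (Q (pot_mult X z))" unfolding e by (rule ws_add(1)[OF wP_ge q2(1) q1(1)])
  have "wn (wP pl m) (Q (pot_mult X z)) \<le> wn (wP pl m) (Q (pot_mult Xl z)) + wn (wP pl m) (Q (pot_mult Xh z))"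
    unfolding e by (rule ws_add(2)[OF wP_ge q2(1) q1(1)])
  then show "wn (wP pl m) (Q (pot_mult X z)) \<le> 1/2 * wn (wP pl m) z" using b1 b2 by simp
qed

end


context setting begin

definition sol where
  "sol X g u \<longleftrightarrow> ws (wP pl m) u \<and> (\<forall>k. S_expr pl m X u k + complex_of_real \<mu> * u k = g k)"

lemma s_ne0: "complex_of_real (dd pl m k + \<mu>) \<noteq> 0"
  using dd_ge[of pl m k] mu1 by (simp del: of_real_add)

lemma sol_iff:
  "sol X g u \<longleftrightarrow> ws (wP pl m) u \<and> u = (\<lambda>k. Q g k - Q (pot_mult X u) k)"
proof -
  have "(S_expr pl m X u k + complex_of_real \<mu> * u k = g k) \<longleftrightarrow> (u k = Q g k - Q (pot_mult X u) k)" for k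
  proof -
    have e: "S_expr pl m X u k + complex_of_real \<mu> * u k = complex_of_real (dd pl m k + \<mu>) * u k + pot_mult X u k"
      by (simp add: S_expr_dd algebra_simps)
    show ?thesis unfolding e Qm_def using s_ne0[of k]
      by (auto simp: field_simps simp del: of_real_add)
  qed
  then show ?thesis unfolding sol_def by (auto simp: fun_eq_iff)
qed

lemma T_ex:
  assumes X: "good X" and g: "ws (wN pl m) g"
  shows "\<exists>!u. sol X g u"
proof -
  have Xws: "ws (wN True m) X" using X by (simp add: good_def)
  define \<Phi> where "\<Phi> u = (\<lambda>k. Q g k - Q (pot_mult X u) k)" for u
  have "\<exists>!u. ws (wP pl m) u \<and> \<Phi> u = u"
  proof (rule contraction_fix[OF wP_pos, of "1/2"])
    show "ws (wP pl m) (\<Phi> u)" if "ws (wP pl m) u" for u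
      unfolding \<Phi>_def by (rule ws_diff(1)[OF wP_ge Q1(1)[OF mu1 g] C1(1)[OF X that]])
    fix u v assume u: "ws (wP pl m) u" and v: "ws (wP pl m) v"
    have "(\<lambda>k. \<Phi> u k - \<Phi> v k) = Q (pot_mult X (\<lambda>j. v j - u j))"
      unfolding \<Phi>_def pm_diff[OF msumm[OF Xws v] msumm[OF Xws u]] Q_diff by (simp add: fun_eq_iff)
    then have "wn (wP pl m) (\<lambda>k. \<Phi> u k - \<Phi> v k) \<le> 1/2 * wn (wP pl m) (\<lambda>j. v j - u j)"
      using C1(2)[OF X ws_diff(1)[OF wP_ge v u]] by simp
    then show "wn (wP pl m) (\<lambda>k. \<Phi> u k - \<Phi> v k) \<le> 1/2 * wn (wP pl m) (\<lambda>k. u k - v k)"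
      by (simp add: wn_commute[of _ v u])
  qed simp_all
  then show ?thesis unfolding sol_iff \<Phi>_def by metis
qed

definition T where "T X g = (THE u. sol X g u)"

lemma T_sol: "good X \<Longrightarrow> ws (wN pl m) g \<Longrightarrow> sol X g (T X g)"
  unfolding T_def by (rule theI'[OF T_ex])

lemma T_uniq: "good X \<Longrightarrow> ws (wN pl m) g \<Longrightarrow> sol X g u \<Longrightarrow> T X g = u"
  unfolding T_def by (rule the1_equality[OF T_ex])

lemma sol_ws: "sol X g u \<Longrightarrow> ws (wP pl m) u" by (simp add: sol_def)

lemma sol_bound:
  assumes X: "good X" and g: "ws (wN pl m) g" and s: "sol X g u"
  shows "wn (wP pl m) u \<le> 2 * wn (wP pl m) (Q g)"
proof -
  have u: "ws (wP pl m) u" and ue: "u = (\<lambda>k. Q g k - Q (pot_mult X u) k)" using s by (auto simp: sol_iff)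
  have "wn (wP pl m) u \<le> wn (wP pl m) (Q g) + wn (wP pl m) (Q (pot_mult X u))"
    by (subst ue, rule ws_diff(2)[OF wP_ge Q1(1)[OF mu1 g] C1(1)[OF X u]])
  also have "\<dots> \<le> wn (wP pl m) (Q g) + 1/2 * wn (wP pl m) u" using C1(2)[OF X u] by simp
  finally show ?thesis by simp
qed

lemma sol_bound_L2:
  assumes X: "good X" and g: "ws w1 g" and s: "sol X g u"
  shows "wn (wP pl m) u \<le> 2 ^ (m+1) * wn w1 g"
proof -
  have gN: "ws (wN pl m) g" using Hneg_le_L2[OF g] by simp
  have "wn (wP pl m) u \<le> 2 * wn (wP pl m) (Q g)" by (rule sol_bound[OF X gN s])
  also have "\<dots> \<le> 2 * (2 ^ m / sqrt \<mu> * wn w1 g)" using Q2(2)[where pl=pl and m=m, OF mu1 g] by simp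
  also have "\<dots> \<le> 2 * (2 ^ m * wn w1 g)"
  proof -
    have "2 ^ m / sqrt \<mu> \<le> 2 ^ m" using mu1 by (simp add: divide_le_eq)
    then show ?thesis by (intro mult_left_mono mult_right_mono wn_ge0[OF w1_ge]) simp_all
  qed
  finally show ?thesis by simp
qed

lemma sol_diff:
  assumes Xws: "ws (wN True m) X" and s1: "sol X g1 u1" and s2: "sol X g2 u2"
  shows "sol X (\<lambda>k. g1 k - g2 k) (\<lambda>k. u1 k - u2 k)"
proof -
  have u1: "ws (wP pl m) u1" and u2: "ws (wP pl m) u2" using s1 s2 by (simp_all add: sol_def)
  have pe: "pot_mult X (\<lambda>k. u1 k - u2 k) = (\<lambda>n. pot_mult X u1 n - pot_mult X u2 n)"
    by (rule pm_diff[OF msumm[OF Xws u1] msumm[OF Xws u2]])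
  show ?thesis using s1 s2 unfolding sol_def
    by (auto simp: ws_diff(1)[OF wP_ge u1 u2] S_expr_def pe algebra_simps)
qed

lemma sol_scale:
  assumes s: "sol X g u"
  shows "sol X (\<lambda>k. c * g k) (\<lambda>k. c * u k)"
proof -
  have u: "ws (wP pl m) u" and e: "\<And>k. S_expr pl m X u k + complex_of_real \<mu> * u k = g k"
    using s by (auto simp: sol_def)
  have "S_expr pl m X (\<lambda>k. c * u k) k + complex_of_real \<mu> * (c * u k) = c * (S_expr pl m X u k + complex_of_real \<mu> * u k)" for k
    by (simp add: S_expr_def pm_scale algebra_simps)
  then show ?thesis unfolding sol_def using ws_cmult(1)[OF u wP_ge] e by simp
qed

lemma sol_zero: "sol X (\<lambda>k. 0) (\<lambda>k. 0)"
  unfolding sol_def by (simp add: ws_zero S_expr_def pm_zero)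

lemma T_diff_est:
  assumes X: "good X" and z: "ws w1 z"
  shows "wn (wP pl m) (\<lambda>k. T X z k - T W z k) \<le> 2 * 4 ^ m * CM * wn (wN True m) (\<lambda>k. X k - W k) * wn (wP pl m) (T W z)"
proof -
  have zN: "ws (wN pl m) z" using Hneg_le_L2[OF z] by simp
  have Xws: "ws (wN True m) X" using X by (simp add: good_def)
  define u where "u = T X z"
  define w where "w = T W z"
  have su: "sol X z u" unfolding u_def by (rule T_sol[OF X zN])
  have sw: "sol W z w" unfolding w_def by (rule T_sol[OF good_W zN])
  have uws: "ws (wP pl m) u" and wws: "ws (wP pl m) w" using su sw by (simp_all add: sol_def)
  have WX: "ws (wN True m) (\<lambda>i. W i - X i)" by (rule ws_diff(1)[OF wN_ge Wws Xws])
  have uw: "ws (wP pl m) (\<lambda>j. u j - w j)" by (rule ws_diff(1)[OF wP_ge uws wws])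
  have p1: "pot_mult (\<lambda>i. W i - X i) w = (\<lambda>n. pot_mult W w n - pot_mult X w n)"
    by (rule pm_wdiff[OF msumm[OF Wws wws] msumm[OF Xws wws]])
  have p2: "pot_mult X (\<lambda>j. u j - w j) = (\<lambda>n. pot_mult X u n - pot_mult X w n)"
    by (rule pm_diff[OF msumm[OF Xws uws] msumm[OF Xws wws]])
  have ident: "(\<lambda>k. u k - w k) = (\<lambda>k. Q (pot_mult (\<lambda>i. W i - X i) w) k - Q (pot_mult X (\<lambda>j. u j - w j)) k)"
  proof
    fix k
    have e1: "complex_of_real (dd pl m k + \<mu>) * u k + pot_mult X u k = z k"
      using su unfolding sol_def by (simp add: S_expr_dd algebra_simps)
    have e2: "complex_of_real (dd pl m k + \<mu>) * w k + pot_mult W w k = z k"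
      using sw unfolding sol_def by (simp add: S_expr_dd algebra_simps)
    show "u k - w k = Q (pot_mult (\<lambda>i. W i - X i) w) k - Q (pot_mult X (\<lambda>j. u j - w j)) k"
      unfolding p1 p2 Qm_def using s_ne0[of k] e1 e2
      by (simp add: field_simps del: of_real_add)
  qed
  have q1: "ws (wP pl m) (Q (pot_mult (\<lambda>i. W i - X i) w))"
    "wn (wP pl m) (Q (pot_mult (\<lambda>i. W i - X i) w)) \<le> 4 ^ m * (CM * wn (wN True m) (\<lambda>i. W i - X i) * wn (wP pl m) w)"
  proof -
    have a: "ws (wN pl m) (pot_mult (\<lambda>i. W i - X i) w)" "wn (wN pl m) (pot_mult (\<lambda>i. W i - X i) w) \<le> CM * wn (wN True m) (\<lambda>i. W i - X i) * wn (wP pl m) w"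
      using mws[OF WX wws] by auto
    show "ws (wP pl m) (Q (pot_mult (\<lambda>i. W i - X i) w))" using Q1(1)[OF mu1 a(1)] .
    show "wn (wP pl m) (Q (pot_mult (\<lambda>i. W i - X i) w)) \<le> 4 ^ m * (CM * wn (wN True m) (\<lambda>i. W i - X i) * wn (wP pl m) w)"
      using Q1(2)[OF mu1 a(1)] a(2) by (smt (verit) mult_left_mono zero_le_power)
  qed
  have "wn (wP pl m) (\<lambda>k. u k - w k) \<le> wn (wP pl m) (Q (pot_mult (\<lambda>i. W i - X i) w)) + wn (wP pl m) (Q (pot_mult X (\<lambda>j. u j - w j)))"
    by (subst ident, rule ws_diff(2)[OF wP_ge q1(1) C1(1)[OF X uw]])
  also have "\<dots> \<le> 4 ^ m * (CM * wn (wN True m) (\<lambda>i. W i - X i) * wn (wP pl m) w) + 1/2 * wn (wP pl m) (\<lambda>j. u j - w j)"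
    by (rule add_mono[OF q1(2) C1(2)[OF X uw]])
  finally have "wn (wP pl m) (\<lambda>k. u k - w k) \<le> 2 * 4 ^ m * CM * wn (wN True m) (\<lambda>i. W i - X i) * wn (wP pl m) w"
    by simp
  then show ?thesis unfolding u_def w_def by (simp add: wn_commute[of _ W X])
qed

end


lemma rs_iff: "lam \<in> resolvent_set pl m X \<longleftrightarrow>
   (\<forall>f. ws w1 f \<longrightarrow> (\<exists>!u. (ws (wP pl m) u \<and> ws w1 (S_expr pl m X u)) \<and> (\<lambda>k. S_expr pl m X u k - lam * u k) = f)) \<and>
   (\<exists>C. \<forall>f u. ws w1 f \<longrightarrow> (ws (wP pl m) u \<and> ws w1 (S_expr pl m X u)) \<longrightarrow> (\<lambda>k. S_expr pl m X u k - lam * u k) = f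
        \<longrightarrow> wn w1 u \<le> C * wn w1 f)"
  by (simp add: resolvent_set_def S_dom_def inH_pos inH_0)

lemma res_eq: "resolvent pl m X lam f = (THE u. (ws (wP pl m) u \<and> ws w1 (S_expr pl m X u)) \<and> (\<lambda>k. S_expr pl m X u k - lam * u k) = f)"
  by (simp add: resolvent_def S_dom_def inH_pos inH_0)

lemma in_dom:
  assumes f: "ws w1 f" and u: "ws (wP pl m) u" and e: "(\<lambda>k. S_expr pl m X u k - lam * u k) = f"
  shows "ws w1 (S_expr pl m X u)"
proof -
  have "S_expr pl m X u = (\<lambda>k. f k + lam * u k)"
  proof
    fix k show "S_expr pl m X u k = f k + lam * u k" using fun_cong[OF e, of k] by (simp add: algebra_simps)
  qed
  moreover have "ws w1 (\<lambda>k. lam * u k)" using ws_cmult(1)[OF conjunct1[OF L2_le_Hm[OF u]] w1_ge] .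
  ultimately show ?thesis using ws_add(1)[OF w1_ge f] by simp
qed

locale setting2 = setting +
  fixes lam :: complex
  assumes lamres: "lam \<in> resolvent_set pl m W"
begin

abbreviation R where "R \<equiv> resolvent pl m W lam"
definition \<nu> where "\<nu> = lam + complex_of_real \<mu>"

lemma R_ex: "ws w1 f \<Longrightarrow> \<exists>!u. (ws (wP pl m) u \<and> ws w1 (S_expr pl m W u)) \<and> (\<lambda>k. S_expr pl m W u k - lam * u k) = f"
  using lamres unfolding rs_iff by blast

lemma R_prop:
  assumes f: "ws w1 f"
  shows "ws (wP pl m) (R f)" "(\<lambda>k. S_expr pl m W (R f) k - lam * R f k) = f"
  using theI'[OF R_ex[OF f]] unfolding res_eq[symmetric] by auto

lemma R_uniq:
  assumes f: "ws w1 f" and u: "ws (wP pl m) u" and e: "(\<lambda>k. S_expr pl m W u k - lam * u k) = f"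
  shows "R f = u"
  unfolding res_eq by (rule the1_equality[OF R_ex[OF f]]) (use in_dom[OF f u e] u e in auto)

definition CR where "CR = (SOME C. C \<ge> 0 \<and> (\<forall>f. ws w1 f \<longrightarrow> wn w1 (R f) \<le> C * wn w1 f))"

lemma CR_prop: "CR \<ge> 0" "ws w1 f \<Longrightarrow> wn w1 (R f) \<le> CR * wn w1 f"
proof -
  obtain C where C: "\<forall>f u. ws w1 f \<longrightarrow> (ws (wP pl m) u \<and> ws w1 (S_expr pl m W u)) \<longrightarrow> (\<lambda>k. S_expr pl m W u k - lam * u k) = f
        \<longrightarrow> wn w1 u \<le> C * wn w1 f" using lamres unfolding rs_iff by blast
  have "max C 0 \<ge> 0 \<and> (\<forall>f. ws w1 f \<longrightarrow> wn w1 (R f) \<le> max C 0 * wn w1 f)"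
  proof (intro conjI allI impI)
    fix f assume f: "ws w1 f"
    have "wn w1 (R f) \<le> C * wn w1 f"
      using C R_prop[OF f] in_dom[OF f R_prop[OF f]] f by blast
    also have "\<dots> \<le> max C 0 * wn w1 f" by (rule mult_right_mono) (simp_all add: wn_ge0[OF w1_ge])
    finally show "wn w1 (R f) \<le> max C 0 * wn w1 f" .
  qed simp
  then have "CR \<ge> 0 \<and> (\<forall>f. ws w1 f \<longrightarrow> wn w1 (R f) \<le> CR * wn w1 f)"
    unfolding CR_def by (rule someI)
  then show "CR \<ge> 0" "ws w1 f \<Longrightarrow> wn w1 (R f) \<le> CR * wn w1 f" by auto
qed

definition M where "M y = (\<lambda>k. y k + \<nu> * R y k)"
definition Mc where "Mc = 1 + cmod \<nu> * CR"

lemma Mc0: "Mc \<ge> 1" using CR_prop(1) by (simp add: Mc_def)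

lemma R_L2: "ws w1 f \<Longrightarrow> ws w1 (R f)" using L2_le_Hm[OF R_prop(1)] by simp

lemma M_ws:
  assumes y: "ws w1 y"
  shows "ws w1 (M y)" "wn w1 (M y) \<le> Mc * wn w1 y"
proof -
  have r: "ws w1 (\<lambda>k. \<nu> * R y k)" by (rule ws_cmult(1)[OF R_L2[OF y] w1_ge])
  show "ws w1 (M y)" unfolding M_def by (rule ws_add(1)[OF w1_ge y r])
  have "wn w1 (M y) \<le> wn w1 y + wn w1 (\<lambda>k. \<nu> * R y k)" unfolding M_def by (rule ws_add(2)[OF w1_ge y r])
  also have "\<dots> = wn w1 y + cmod \<nu> * wn w1 (R y)" by (simp add: ws_cmult(2)[OF R_L2[OF y] w1_ge])
  also have "\<dots> \<le> wn w1 y + cmod \<nu> * (CR * wn w1 y)" by (intro add_left_mono mult_left_mono CR_prop(2)[OF y]) simp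
  also have "\<dots> = Mc * wn w1 y" by (simp add: Mc_def algebra_simps)
  finally show "wn w1 (M y) \<le> Mc * wn w1 y" .
qed

lemma S_diff_W:
  assumes "ws (wP pl m) a" "ws (wP pl m) b"
  shows "S_expr pl m W (\<lambda>k. a k - b k) = (\<lambda>k. S_expr pl m W a k - S_expr pl m W b k)"
  using pm_diff[OF msumm[OF Wws assms(1)] msumm[OF Wws assms(2)]]
  by (simp add: S_expr_def fun_eq_iff algebra_simps)

lemma R_diff:
  assumes a: "ws w1 a" and b: "ws w1 b"
  shows "R (\<lambda>k. a k - b k) = (\<lambda>k. R a k - R b k)"
proof (rule R_uniq)
  show "ws w1 (\<lambda>k. a k - b k)" by (rule ws_diff(1)[OF w1_ge a b])
  show "ws (wP pl m) (\<lambda>k. R a k - R b k)" by (rule ws_diff(1)[OF wP_ge R_prop(1)[OF a] R_prop(1)[OF b]])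
  show "(\<lambda>k. S_expr pl m W (\<lambda>k. R a k - R b k) k - lam * (R a k - R b k)) = (\<lambda>k. a k - b k)"
    unfolding S_diff_W[OF R_prop(1)[OF a] R_prop(1)[OF b]]
    using R_prop(2)[OF a] R_prop(2)[OF b] by (auto simp: fun_eq_iff algebra_simps)
qed

lemma M_diff:
  assumes a: "ws w1 a" and b: "ws w1 b"
  shows "M (\<lambda>k. a k - b k) = (\<lambda>k. M a k - M b k)"
  unfolding M_def R_diff[OF a b] by (simp add: fun_eq_iff algebra_simps)

lemma R_zero: "R (\<lambda>k. 0) = (\<lambda>k. 0)"
  by (rule R_uniq) (simp_all add: ws_zero S_expr_def pm_zero)

lemma M_zero: "M (\<lambda>k. 0) = (\<lambda>k. 0)" by (simp add: M_def R_zero)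

lemma sol_R: "sol W z w \<Longrightarrow> ws w1 z \<Longrightarrow> R (\<lambda>k. z k - \<nu> * w k) = w"
proof (rule R_uniq)
  assume s: "sol W z w" and z: "ws w1 z"
  show w: "ws (wP pl m) w" using s by (simp add: sol_def)
  show "ws w1 (\<lambda>k. z k - \<nu> * w k)"
    by (rule ws_diff(1)[OF w1_ge z ws_cmult(1)[OF conjunct1[OF L2_le_Hm[OF w]] w1_ge]])
  show "(\<lambda>k. S_expr pl m W w k - lam * w k) = (\<lambda>k. z k - \<nu> * w k)"
    using s unfolding sol_def \<nu>_def by (auto simp: fun_eq_iff algebra_simps)
qed

lemma KI:
  assumes z: "ws w1 z"
  shows "M (\<lambda>k. z k - \<nu> * T W z k) = z"
proof -
  have zN: "ws (wN pl m) z" using Hneg_le_L2[OF z] by simp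
  have s: "sol W z (T W z)" by (rule T_sol[OF good_W zN])
  show ?thesis unfolding M_def sol_R[OF s z] by simp
qed

lemma M_inj:
  assumes y: "ws w1 y" and e: "M y = (\<lambda>k. 0)"
  shows "y = (\<lambda>k. 0)"
proof -
  have yk: "y k = - \<nu> * R y k" for k using fun_cong[OF e, of k] by (simp add: M_def eq_neg_iff_add_eq_0)
  have "sol W (\<lambda>k. 0) (R y)"
    unfolding sol_def using R_prop[OF y] yk by (auto simp: fun_eq_iff \<nu>_def algebra_simps)
  then have "T W (\<lambda>k. 0) = R y" by (rule T_uniq[OF good_W ws_zero(1)])
  moreover have "T W (\<lambda>k. 0) = (\<lambda>k. 0)" by (rule T_uniq[OF good_W ws_zero(1) sol_zero])
  ultimately show ?thesis using yk by (simp add: fun_eq_iff)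
qed

end


lemma pk_eq: fixes S F V l c :: complex
  shows "(S + c * V = F + (l + c) * V) = (S - l * V = F)"
proof -
  have "(S + c * V = F + (l + c) * V) = (S = F + (l + c) * V - c * V)" by (simp add: eq_diff_eq)
  also have "F + (l + c) * V - c * V = F + l * V" by (simp add: algebra_simps)
  also have "(S = F + l * V) = (S - l * V = F)" by (simp add: diff_eq_eq)
  finally show ?thesis .
qed

context setting2 begin

definition \<kappa> where "\<kappa> = 2 * 4 ^ m * CM * 2 ^ (m+1)"
lemma \<kappa>0: "\<kappa> \<ge> 0" by (simp add: \<kappa>_def CM0)

definition \<Psi> where "\<Psi> X f v = (\<lambda>k. v k - M (\<lambda>j. v j - T X (\<lambda>i. f i + \<nu> * v i) j) k)"

lemma g_ws: "ws w1 f \<Longrightarrow> ws w1 v \<Longrightarrow> ws w1 (\<lambda>i. f i + \<nu> * v i)"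
  by (rule ws_add(1)[OF w1_ge _ ws_cmult(1)[OF _ w1_ge]])

lemma L2N: "ws w1 g \<Longrightarrow> ws (wN pl m) g" using Hneg_le_L2 by blast

lemma T_props:
  assumes X: "good X" and g: "ws w1 g"
  shows "ws (wP pl m) (T X g)" "ws w1 (T X g)" "wn w1 (T X g) \<le> 2 ^ (m+1) * wn w1 g"
    "wn (wP pl m) (T X g) \<le> 2 ^ (m+1) * wn w1 g"
proof -
  have s: "sol X g (T X g)" by (rule T_sol[OF X L2N[OF g]])
  show w: "ws (wP pl m) (T X g)" using s by (simp add: sol_def)
  show "ws w1 (T X g)" using L2_le_Hm[OF w] by simp
  show b: "wn (wP pl m) (T X g) \<le> 2 ^ (m+1) * wn w1 g" by (rule sol_bound_L2[OF X g s])
  show "wn w1 (T X g) \<le> 2 ^ (m+1) * wn w1 g" using L2_le_Hm[OF w] b by simp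
qed

lemma T_lin:
  assumes X: "good X" and a: "ws w1 a" and b: "ws w1 b"
  shows "T X (\<lambda>k. a k - b k) = (\<lambda>k. T X a k - T X b k)"
proof (rule T_uniq[OF X])
  have Xws: "ws (wN True m) X" using X by (simp add: good_def)
  show "ws (wN pl m) (\<lambda>k. a k - b k)" by (rule L2N[OF ws_diff(1)[OF w1_ge a b]])
  show "sol X (\<lambda>k. a k - b k) (\<lambda>k. T X a k - T X b k)"
    by (rule sol_diff[OF Xws T_sol[OF X L2N[OF a]] T_sol[OF X L2N[OF b]]])
qed

lemma T_scale:
  assumes X: "good X" and a: "ws w1 a"
  shows "T X (\<lambda>k. c * a k) = (\<lambda>k. c * T X a k)"
proof (rule T_uniq[OF X])
  show "ws (wN pl m) (\<lambda>k. c * a k)" by (rule L2N[OF ws_cmult(1)[OF a w1_ge]])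
  show "sol X (\<lambda>k. c * a k) (\<lambda>k. c * T X a k)" by (rule sol_scale[OF T_sol[OF X L2N[OF a]]])
qed

lemma p_ws:
  assumes X: "good X" and f: "ws w1 f" and v: "ws w1 v"
  shows "ws w1 (\<lambda>j. v j - T X (\<lambda>i. f i + \<nu> * v i) j)"
  by (rule ws_diff(1)[OF w1_ge v T_props(2)[OF X g_ws[OF f v]]])

lemma \<Psi>_ws:
  assumes X: "good X" and f: "ws w1 f" and v: "ws w1 v"
  shows "ws w1 (\<Psi> X f v)"
  unfolding \<Psi>_def by (rule ws_diff(1)[OF w1_ge v M_ws(1)[OF p_ws[OF X f v]]])

lemma \<Psi>_lip:
  assumes X: "good X" and f: "ws w1 f" and v: "ws w1 v" and v': "ws w1 v'"
  shows "wn w1 (\<lambda>k. \<Psi> X f v k - \<Psi> X f v' k) \<le> Mc * cmod \<nu> * \<kappa> * wn (wN True m) (\<lambda>k. X k - W k) * wn w1 (\<lambda>k. v k - v' k)"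
proof -
  define z where "z = (\<lambda>k. v k - v' k)"
  define g where "g = (\<lambda>i. f i + \<nu> * v i)"
  define g' where "g' = (\<lambda>i. f i + \<nu> * v' i)"
  define e where "e = wn (wN True m) (\<lambda>k. X k - W k)"
  have z: "ws w1 z" unfolding z_def by (rule ws_diff(1)[OF w1_ge v v'])
  have g: "ws w1 g" "ws w1 g'" unfolding g_def g'_def by (rule g_ws[OF f v], rule g_ws[OF f v'])
  have gg: "(\<lambda>k. g k - g' k) = (\<lambda>k. \<nu> * z k)" by (simp add: g_def g'_def z_def fun_eq_iff algebra_simps)
  have hT: "(\<lambda>k. T X g k - T X g' k) = (\<lambda>k. \<nu> * T X z k)"
    using T_lin[OF X g] T_scale[OF X z, of \<nu>] gg by simp
  define p where "p = (\<lambda>j. v j - T X g j)"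
  define p' where "p' = (\<lambda>j. v' j - T X g' j)"
  have p: "ws w1 p" "ws w1 p'" unfolding p_def p'_def g_def g'_def by (rule p_ws[OF X f v], rule p_ws[OF X f v'])
  have pp: "(\<lambda>k. p k - p' k) = (\<lambda>k. z k - \<nu> * T X z k)"
    using fun_cong[OF hT] by (auto simp: p_def p'_def z_def fun_eq_iff algebra_simps)
  have TXz: "ws w1 (T X z)" "ws w1 (T W z)" using T_props(2)[OF X z] T_props(2)[OF good_W z] by auto
  have a1: "ws w1 (\<lambda>k. z k - \<nu> * T W z k)" by (rule ws_diff(1)[OF w1_ge z ws_cmult(1)[OF TXz(2) w1_ge]])
  have a2: "ws w1 (\<lambda>k. z k - \<nu> * T X z k)" by (rule ws_diff(1)[OF w1_ge z ws_cmult(1)[OF TXz(1) w1_ge]])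
  define q where "q = (\<lambda>k. \<nu> * (T X z k - T W z k))"
  have qq: "(\<lambda>k. (z k - \<nu> * T W z k) - (z k - \<nu> * T X z k)) = q" by (simp add: q_def fun_eq_iff algebra_simps)
  have eq: "(\<lambda>k. \<Psi> X f v k - \<Psi> X f v' k) = M q"
  proof -
    have "(\<lambda>k. \<Psi> X f v k - \<Psi> X f v' k) = (\<lambda>k. z k - (M p k - M p' k))"
      by (simp add: \<Psi>_def p_def p'_def g_def g'_def z_def fun_eq_iff algebra_simps)
    also have "\<dots> = (\<lambda>k. z k - M (\<lambda>k. z k - \<nu> * T X z k) k)"
      using M_diff[OF p] pp by (simp add: fun_eq_iff)
    also have "\<dots> = (\<lambda>k. M (\<lambda>k. z k - \<nu> * T W z k) k - M (\<lambda>k. z k - \<nu> * T X z k) k)"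
      by (simp add: KI[OF z])
    also have "\<dots> = M q" using M_diff[OF a1 a2] qq by simp
    finally show ?thesis .
  qed
  have dws: "ws (wP pl m) (\<lambda>k. T X z k - T W z k)"
    by (rule ws_diff(1)[OF wP_ge T_props(1)[OF X z] T_props(1)[OF good_W z]])
  have d1: "ws w1 (\<lambda>k. T X z k - T W z k)" using L2_le_Hm[OF dws] by simp
  have q: "ws w1 q" unfolding q_def by (rule ws_cmult(1)[OF d1 w1_ge])
  have "wn w1 (\<lambda>k. \<Psi> X f v k - \<Psi> X f v' k) \<le> Mc * wn w1 q" unfolding eq by (rule M_ws(2)[OF q])
  also have "wn w1 q = cmod \<nu> * wn w1 (\<lambda>k. T X z k - T W z k)" unfolding q_def by (rule ws_cmult(2)[OF d1 w1_ge])
  also have "wn w1 (\<lambda>k. T X z k - T W z k) \<le> \<kappa> * e * wn w1 z"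
  proof -
    have "wn w1 (\<lambda>k. T X z k - T W z k) \<le> wn (wP pl m) (\<lambda>k. T X z k - T W z k)" using L2_le_Hm[OF dws] by simp
    also have "\<dots> \<le> 2 * 4 ^ m * CM * e * wn (wP pl m) (T W z)" unfolding e_def by (rule T_diff_est[OF X z])
    also have "\<dots> \<le> 2 * 4 ^ m * CM * e * (2 ^ (m+1) * wn w1 z)"
      by (intro mult_left_mono T_props(4)[OF good_W z]) (simp add: e_def CM0 wn_ge0[OF wN_ge])
    also have "\<dots> = \<kappa> * e * wn w1 z" by (simp add: \<kappa>_def mult_ac)
    finally show ?thesis .
  qed
  then have "Mc * (cmod \<nu> * wn w1 (\<lambda>k. T X z k - T W z k)) \<le> Mc * (cmod \<nu> * (\<kappa> * e * wn w1 z))"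
    using Mc0 by (intro mult_left_mono) simp_all
  finally show ?thesis by (simp add: z_def e_def mult_ac)
qed

lemma sol_res:
  assumes f: "ws w1 f"
  shows "sol X (\<lambda>i. f i + \<nu> * v i) v \<longleftrightarrow> ws (wP pl m) v \<and> (\<lambda>k. S_expr pl m X v k - lam * v k) = f"
proof -
  have "(\<forall>k. S_expr pl m X v k + complex_of_real \<mu> * v k = f k + \<nu> * v k) \<longleftrightarrow> (\<lambda>k. S_expr pl m X v k - lam * v k) = f"
    unfolding \<nu>_def pk_eq fun_eq_iff ..
  then show ?thesis by (simp add: sol_def)
qed

lemma \<Psi>_fix:
  assumes X: "good X" and f: "ws w1 f" and v: "ws w1 v"
  shows "\<Psi> X f v = v \<longleftrightarrow> sol X (\<lambda>i. f i + \<nu> * v i) v"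
proof
  assume e: "\<Psi> X f v = v"
  have "M (\<lambda>j. v j - T X (\<lambda>i. f i + \<nu> * v i) j) = (\<lambda>k. 0)"
  proof
    fix k show "M (\<lambda>j. v j - T X (\<lambda>i. f i + \<nu> * v i) j) k = 0"
      using fun_cong[OF e, of k] unfolding \<Psi>_def by simp
  qed
  then have "(\<lambda>j. v j - T X (\<lambda>i. f i + \<nu> * v i) j) = (\<lambda>k. 0)" by (rule M_inj[OF p_ws[OF X f v]])
  then have "T X (\<lambda>i. f i + \<nu> * v i) = v"
  proof -
    assume h: "(\<lambda>j. v j - T X (\<lambda>i. f i + \<nu> * v i) j) = (\<lambda>k. 0)"
    show ?thesis
    proof
      fix k show "T X (\<lambda>i. f i + \<nu> * v i) k = v k" using fun_cong[OF h, of k] by simp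
    qed
  qed
  then show "sol X (\<lambda>i. f i + \<nu> * v i) v" using T_sol[OF X L2N[OF g_ws[OF f v]]] by simp
next
  assume s: "sol X (\<lambda>i. f i + \<nu> * v i) v"
  then have "T X (\<lambda>i. f i + \<nu> * v i) = v" by (rule T_uniq[OF X L2N[OF g_ws[OF f v]]])
  then have "(\<lambda>j. v j - T X (\<lambda>i. f i + \<nu> * v i) j) = (\<lambda>k. 0)" by simp
  then show "\<Psi> X f v = v" unfolding \<Psi>_def by (simp only: M_zero) simp
qed

end


context setting2 begin

definition Dc where "Dc = 2 * Mc * \<kappa> * (1 + cmod \<nu> * CR)"

lemma equivP:
  assumes X: "good X" and f: "ws w1 f"
  shows "((ws (wP pl m) u \<and> ws w1 (S_expr pl m X u)) \<and> (\<lambda>k. S_expr pl m X u k - lam * u k) = f) \<longleftrightarrow> (ws w1 u \<and> \<Psi> X f u = u)"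
proof
  assume h: "(ws (wP pl m) u \<and> ws w1 (S_expr pl m X u)) \<and> (\<lambda>k. S_expr pl m X u k - lam * u k) = f"
  have u: "ws w1 u" using L2_le_Hm h by blast
  have "sol X (\<lambda>i. f i + \<nu> * u i) u" using sol_res[OF f] h by blast
  then show "ws w1 u \<and> \<Psi> X f u = u" using \<Psi>_fix[OF X f u] u by blast
next
  assume h: "ws w1 u \<and> \<Psi> X f u = u"
  then have "sol X (\<lambda>i. f i + \<nu> * u i) u" using \<Psi>_fix[OF X f] by blast
  then have "ws (wP pl m) u \<and> (\<lambda>k. S_expr pl m X u k - lam * u k) = f" using sol_res[OF f] by blast
  then show "(ws (wP pl m) u \<and> ws w1 (S_expr pl m X u)) \<and> (\<lambda>k. S_expr pl m X u k - lam * u k) = f"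
    using in_dom[OF f] by blast
qed

lemma main_X:
  assumes X: "good X" and small: "Mc * cmod \<nu> * \<kappa> * wn (wN True m) (\<lambda>k. X k - W k) \<le> 1/2"
  shows "lam \<in> resolvent_set pl m X"
    and "ws w1 f \<Longrightarrow> wn w1 (\<lambda>k. resolvent pl m X lam f k - R f k) \<le> Dc * wn (wN True m) (\<lambda>k. X k - W k) * wn w1 f"
proof -
  define e where "e = wn (wN True m) (\<lambda>k. X k - W k)"
  have e0: "e \<ge> 0" by (simp add: e_def wn_ge0[OF wN_ge])
  have lipX: "wn w1 (\<lambda>k. \<Psi> X f v k - \<Psi> X f v' k) \<le> 1/2 * wn w1 (\<lambda>k. v k - v' k)"
    if f: "ws w1 f" and v: "ws w1 v" and v': "ws w1 v'" for f v v'
  proof -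
    have "wn w1 (\<lambda>k. \<Psi> X f v k - \<Psi> X f v' k) \<le> Mc * cmod \<nu> * \<kappa> * e * wn w1 (\<lambda>k. v k - v' k)"
      unfolding e_def by (rule \<Psi>_lip[OF X f v v'])
    also have "\<dots> \<le> 1/2 * wn w1 (\<lambda>k. v k - v' k)"
      by (rule mult_right_mono) (use small in \<open>simp_all add: e_def wn_ge0[OF w1_ge]\<close>)
    finally show ?thesis .
  qed
  have fixex: "\<exists>!v. ws w1 v \<and> \<Psi> X f v = v" if f: "ws w1 f" for f
    by (rule contraction_fix[OF w1_pos, of "1/2"]) (use \<Psi>_ws[OF X f] lipX[OF f] in auto)
  have exu: "\<exists>!u. (ws (wP pl m) u \<and> ws w1 (S_expr pl m X u)) \<and> (\<lambda>k. S_expr pl m X u k - lam * u k) = f"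
    if f: "ws w1 f" for f
    unfolding equivP[OF X f] by (rule fixex[OF f])
  have bnd: "wn w1 u \<le> 2 * Mc * 2 ^ (m+1) * wn w1 f" if f: "ws w1 f" and u: "ws w1 u" and fx: "\<Psi> X f u = u" for f u
  proof -
    define \<Psi>0 where "\<Psi>0 = \<Psi> X f (\<lambda>k. 0)"
    have z0: "ws w1 (\<lambda>k::int. 0::complex)" by (rule ws_zero(1))
    have p0: "ws w1 \<Psi>0" unfolding \<Psi>0_def by (rule \<Psi>_ws[OF X f z0])
    have e0': "\<Psi>0 = (\<lambda>k. - M (\<lambda>j. - T X f j) k)" by (simp add: \<Psi>0_def \<Psi>_def)
    have Tf: "ws w1 (T X f)" by (rule T_props(2)[OF X f])
    have mT: "ws w1 (\<lambda>j. - T X f j)" by (rule ws_uminus(1)[OF Tf])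
    have wp0: "wn w1 \<Psi>0 \<le> Mc * (2 ^ (m+1) * wn w1 f)"
    proof -
      have "wn w1 \<Psi>0 = wn w1 (M (\<lambda>j. - T X f j))" unfolding e0' by (rule ws_uminus(2)[OF M_ws(1)[OF mT]])
      also have "\<dots> \<le> Mc * wn w1 (\<lambda>j. - T X f j)" by (rule M_ws(2)[OF mT])
      also have "\<dots> = Mc * wn w1 (T X f)" by (simp add: ws_uminus(2)[OF Tf])
      also have "\<dots> \<le> Mc * (2 ^ (m+1) * wn w1 f)" using Mc0 by (intro mult_left_mono T_props(3)[OF X f]) simp
      finally show ?thesis .
    qed
    have "wn w1 (\<lambda>k. u k - 0) \<le> wn w1 (\<lambda>k. u k - \<Psi>0 k) + wn w1 (\<lambda>k. \<Psi>0 k - 0)"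
      by (rule wn_tri[OF w1_ge u z0 p0])
    also have "wn w1 (\<lambda>k. u k - \<Psi>0 k) \<le> 1/2 * wn w1 (\<lambda>k. u k - 0)"
      using lipX[OF f u z0] fx unfolding \<Psi>0_def by simp
    finally have "wn w1 u \<le> 1/2 * wn w1 u + wn w1 \<Psi>0" by simp
    then show ?thesis using wp0 by simp
  qed
  show "lam \<in> resolvent_set pl m X"
    unfolding rs_iff
  proof (intro conjI allI impI exI)
    fix f assume f: "ws w1 f"
    show "\<exists>!u. (ws (wP pl m) u \<and> ws w1 (S_expr pl m X u)) \<and> (\<lambda>k. S_expr pl m X u k - lam * u k) = f"
      by (rule exu[OF f])
  next
    fix f u assume f: "ws w1 f" and P: "ws (wP pl m) u \<and> ws w1 (S_expr pl m X u)"
      and eq: "(\<lambda>k. S_expr pl m X u k - lam * u k) = f"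
    have "ws w1 u \<and> \<Psi> X f u = u" using equivP[OF X f, of u] P eq by blast
    then show "wn w1 u \<le> 2 * Mc * 2 ^ (m+1) * wn w1 f" using bnd[OF f] by blast
  qed
  assume f: "ws w1 f"
  define vX where "vX = resolvent pl m X lam f"
  define vW where "vW = R f"
  have PX: "(ws (wP pl m) vX \<and> ws w1 (S_expr pl m X vX)) \<and> (\<lambda>k. S_expr pl m X vX k - lam * vX k) = f"
    unfolding vX_def res_eq by (rule theI'[OF exu[OF f]])
  have vX: "ws w1 vX" "\<Psi> X f vX = vX" using equivP[OF X f] PX by blast+
  have PW: "(ws (wP pl m) vW \<and> ws w1 (S_expr pl m W vW)) \<and> (\<lambda>k. S_expr pl m W vW k - lam * vW k) = f"
    unfolding vW_def res_eq by (rule theI'[OF R_ex[OF f]])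
  have vW: "ws w1 vW" "\<Psi> W f vW = vW" using equivP[OF good_W f] PW by blast+
  have vWb: "wn w1 vW \<le> CR * wn w1 f" unfolding vW_def by (rule CR_prop(2)[OF f])
  have PXW: "ws w1 (\<Psi> X f vW)" by (rule \<Psi>_ws[OF X f vW(1)])
  define g where "g = (\<lambda>i. f i + \<nu> * vW i)"
  have g: "ws w1 g" unfolding g_def by (rule g_ws[OF f vW(1)])
  have pX: "ws w1 (\<lambda>j. vW j - T X g j)" unfolding g_def by (rule p_ws[OF X f vW(1)])
  have pW: "ws w1 (\<lambda>j. vW j - T W g j)" unfolding g_def by (rule p_ws[OF good_W f vW(1)])
  have sec: "(\<lambda>k. \<Psi> X f vW k - \<Psi> W f vW k) = M (\<lambda>k. T X g k - T W g k)"
  proof -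
    have "(\<lambda>k. \<Psi> X f vW k - \<Psi> W f vW k) = (\<lambda>k. M (\<lambda>j. vW j - T W g j) k - M (\<lambda>j. vW j - T X g j) k)"
      by (simp add: \<Psi>_def g_def fun_eq_iff)
    also have "\<dots> = M (\<lambda>k. (vW k - T W g k) - (vW k - T X g k))" using M_diff[OF pW pX] by simp
    also have "(\<lambda>k. (vW k - T W g k) - (vW k - T X g k)) = (\<lambda>k. T X g k - T W g k)" by (simp add: fun_eq_iff)
    finally show ?thesis .
  qed
  have dws: "ws (wP pl m) (\<lambda>k. T X g k - T W g k)"
    by (rule ws_diff(1)[OF wP_ge T_props(1)[OF X g] T_props(1)[OF good_W g]])
  have d1: "ws w1 (\<lambda>k. T X g k - T W g k)" using L2_le_Hm[OF dws] by simp
  have gb: "wn w1 g \<le> (1 + cmod \<nu> * CR) * wn w1 f"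
  proof -
    have "wn w1 g \<le> wn w1 f + wn w1 (\<lambda>i. \<nu> * vW i)" unfolding g_def
      by (rule ws_add(2)[OF w1_ge f ws_cmult(1)[OF vW(1) w1_ge]])
    also have "\<dots> = wn w1 f + cmod \<nu> * wn w1 vW" by (simp add: ws_cmult(2)[OF vW(1) w1_ge])
    also have "\<dots> \<le> wn w1 f + cmod \<nu> * (CR * wn w1 f)" by (intro add_left_mono mult_left_mono vWb) simp
    finally show ?thesis by (simp add: algebra_simps)
  qed
  have second: "wn w1 (\<lambda>k. \<Psi> X f vW k - \<Psi> W f vW k) \<le> Mc * \<kappa> * e * ((1 + cmod \<nu> * CR) * wn w1 f)"
  proof -
    have "wn w1 (\<lambda>k. \<Psi> X f vW k - \<Psi> W f vW k) \<le> Mc * wn w1 (\<lambda>k. T X g k - T W g k)"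
      unfolding sec by (rule M_ws(2)[OF d1])
    also have "wn w1 (\<lambda>k. T X g k - T W g k) \<le> \<kappa> * e * wn w1 g"
    proof -
      have "wn w1 (\<lambda>k. T X g k - T W g k) \<le> wn (wP pl m) (\<lambda>k. T X g k - T W g k)" using L2_le_Hm[OF dws] by simp
      also have "\<dots> \<le> 2 * 4 ^ m * CM * e * wn (wP pl m) (T W g)" unfolding e_def by (rule T_diff_est[OF X g])
      also have "\<dots> \<le> 2 * 4 ^ m * CM * e * (2 ^ (m+1) * wn w1 g)"
        by (intro mult_left_mono T_props(4)[OF good_W g]) (simp add: e0 CM0)
      also have "\<dots> = \<kappa> * e * wn w1 g" by (simp add: \<kappa>_def mult_ac)
      finally show ?thesis .
    qed
    then have "Mc * wn w1 (\<lambda>k. T X g k - T W g k) \<le> Mc * (\<kappa> * e * wn w1 g)" using Mc0 by (intro mult_left_mono) simp_all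
    also have "\<dots> \<le> Mc * (\<kappa> * e * ((1 + cmod \<nu> * CR) * wn w1 f))"
      using Mc0 \<kappa>0 e0 gb by (intro mult_left_mono) simp_all
    finally show ?thesis by (simp add: mult_ac)
  qed
  have "wn w1 (\<lambda>k. vX k - vW k) \<le> wn w1 (\<lambda>k. vX k - \<Psi> X f vW k) + wn w1 (\<lambda>k. \<Psi> X f vW k - vW k)"
    by (rule wn_tri[OF w1_ge vX(1) vW(1) PXW])
  also have "wn w1 (\<lambda>k. vX k - \<Psi> X f vW k) \<le> 1/2 * wn w1 (\<lambda>k. vX k - vW k)"
    using lipX[OF f vX(1) vW(1)] vX(2) by simp
  also have "wn w1 (\<lambda>k. \<Psi> X f vW k - vW k) = wn w1 (\<lambda>k. \<Psi> X f vW k - \<Psi> W f vW k)"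
    using vW(2) by simp
  finally have "wn w1 (\<lambda>k. vX k - vW k) \<le> 1/2 * wn w1 (\<lambda>k. vX k - vW k) + Mc * \<kappa> * e * ((1 + cmod \<nu> * CR) * wn w1 f)"
    using second by simp
  then show "wn w1 (\<lambda>k. resolvent pl m X lam f k - R f k) \<le> Dc * wn (wN True m) (\<lambda>k. X k - W k) * wn w1 f"
    unfolding vX_def vW_def e_def Dc_def by (simp add: algebra_simps)
qed

lemma Dc0: "Dc \<ge> 0" using Mc0 \<kappa>0 CR_prop(1) by (simp add: Dc_def)

end


lemma tail_exists:
  assumes pos: "\<And>k. \<omega> k \<ge> 0" and x: "ws \<omega> x" and eps: "\<epsilon> > 0"
  shows "\<exists>F0. finite F0 \<and> wn \<omega> (\<lambda>k. x k - trunc F0 x k) \<le> \<epsilon>"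
proof -
  define h where "h k = \<omega> k * (cmod (x k))\<^sup>2" for k
  have h0: "h k \<ge> 0" for k by (simp add: h_def pos)
  define S where "S = infsum h UNIV"
  have hs: "(h has_sum S) UNIV" using x unfolding ws_def S_def h_def by (rule has_sum_infsum)
  then have "(sum h \<longlongrightarrow> S) (finite_subsets_at_top UNIV)" by (simp add: has_sum_def)
  then have "\<forall>\<^sub>F F in finite_subsets_at_top UNIV. dist (sum h F) S < \<epsilon>\<^sup>2"
    using eps by (intro tendstoD) auto
  then have "\<exists>X. finite X \<and> X \<subseteq> UNIV \<and> (\<forall>Y. finite Y \<and> X \<subseteq> Y \<and> Y \<subseteq> UNIV \<longrightarrow> dist (sum h Y) S < \<epsilon>\<^sup>2)"
    unfolding eventually_finite_subsets_at_top .
  then obtain F0 where F0: "finite F0" and cl: "\<forall>Y. finite Y \<and> F0 \<subseteq> Y \<and> Y \<subseteq> UNIV \<longrightarrow> dist (sum h Y) S < \<epsilon>\<^sup>2"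
    by blast
  have close: "dist (sum h F0) S < \<epsilon>\<^sup>2" using cl F0 by blast
  have fin: "(\<Sum>k\<in>G. \<omega> k * (cmod (x k - trunc F0 x k))\<^sup>2) \<le> \<epsilon>\<^sup>2" if G: "finite G" for G
  proof -
    have "(\<Sum>k\<in>G. \<omega> k * (cmod (x k - trunc F0 x k))\<^sup>2) = (\<Sum>k\<in>G - F0. h k)"
    proof (rule sum.mono_neutral_cong_right)
      show "finite G" by (rule G)
      show "G - F0 \<subseteq> G" by blast
      show "\<forall>k\<in>G - (G - F0). \<omega> k * (cmod (x k - trunc F0 x k))\<^sup>2 = 0" by (simp add: trunc_def)
      show "\<omega> k * (cmod (x k - trunc F0 x k))\<^sup>2 = h k" if "k \<in> G - F0" for k
        using that by (simp add: trunc_def h_def)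
    qed
    also have "\<dots> = sum h (G \<union> F0) - sum h F0"
    proof -
      have fd: "finite (G - F0)" using G by blast
      have dj: "(G - F0) \<inter> F0 = {}" by blast
      have u: "sum h ((G - F0) \<union> F0) = sum h (G - F0) + sum h F0"
        by (rule sum.union_disjoint[OF fd F0 dj])
      have e: "(G - F0) \<union> F0 = G \<union> F0" by blast
      show ?thesis using u unfolding e by linarith
    qed
    also have "\<dots> \<le> S - sum h F0"
    proof -
      have "sum h (G \<union> F0) \<le> S" by (rule finite_sum_le_has_sum[OF hs]) (simp_all add: G F0 h0)
      then show ?thesis by simp
    qed
    also have "\<dots> < \<epsilon>\<^sup>2" using close by (simp add: dist_real_def)
    finally show ?thesis by (rule less_imp_le)
  qed
  have "wn \<omega> (\<lambda>k. x k - trunc F0 x k) \<le> \<epsilon>" by (rule ws_bound(2)[OF pos fin less_imp_le[OF eps]])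
  then show ?thesis using F0 by blast
qed

lemma opnorm_bound:
  assumes c: "c \<ge> 0" and b: "\<And>f. ws w1 f \<Longrightarrow> wn w1 (\<lambda>k. A f k - B f k) \<le> c * wn w1 f"
  shows "0 \<le> opnorm_diff pl A B" "opnorm_diff pl A B \<le> c"
proof -
  define S where "S = {wn w1 (\<lambda>k. A f k - B f k) | f. ws w1 f \<and> wn w1 f \<le> 1}"
  have od: "opnorm_diff pl A B = Sup S" by (simp add: opnorm_diff_def S_def inH_0)
  have mem: "wn w1 (\<lambda>k. A (\<lambda>k. 0) k - B (\<lambda>k. 0) k) \<in> S"
    unfolding S_def using ws_zero[of w1] by auto
  have ub: "x \<le> c" if xS: "x \<in> S" for x
  proof -
    obtain f where f: "ws w1 f" "wn w1 f \<le> 1" and x: "x = wn w1 (\<lambda>k. A f k - B f k)"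
      using xS unfolding S_def by blast
    have "x \<le> c * wn w1 f" using b[OF f(1)] x by simp
    also have "\<dots> \<le> c * 1" by (rule mult_left_mono[OF f(2) c])
    finally show ?thesis by simp
  qed
  have bdd: "bdd_above S" by (rule bdd_aboveI[where M=c]) (rule ub)
  have ne: "S \<noteq> {}" using mem by auto
  show "opnorm_diff pl A B \<le> c" unfolding od by (rule cSup_least[OF ne]) (rule ub)
  have "0 \<le> wn w1 (\<lambda>k. A (\<lambda>k. 0) k - B (\<lambda>k. 0) k)" by (rule wn_ge0[OF w1_ge])
  also have "\<dots> \<le> Sup S" by (rule cSup_upper[OF mem bdd])
  finally show "0 \<le> opnorm_diff pl A B" unfolding od .
qed

theorem theorem5:
  fixes m :: nat and V :: "nat \<Rightarrow> int \<Rightarrow> complex" and W :: "int \<Rightarrow> complex"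
    and pl :: bool and lam :: complex
  assumes "m \<ge> 1"
    and "\<forall>n. in_H True (- real m) (V n)"
    and "in_H True (- real m) W"
    and "(\<lambda>n. Hnorm True (- real m) (\<lambda>k. V n k - W k)) \<longlonglongrightarrow> 0"
    and "lam \<in> resolvent_set pl m W"
  shows "(\<forall>\<^sub>F n in sequentially. lam \<in> resolvent_set pl m (V n)) \<and>
         (\<lambda>n. opnorm_diff pl (resolvent pl m (V n) lam) (resolvent pl m W lam)) \<longlonglongrightarrow> 0"
proof -
  note m1 = assms(1)
  have Vws: "\<And>n. ws (wN True m) (V n)" using assms(2) by (simp add: inH_neg)
  have Wws: "ws (wN True m) W" using assms(3) by (simp add: inH_neg)
  define e where "e n = wn (wN True m) (\<lambda>k. V n k - W k)" for n
  have e0: "e \<longlonglongrightarrow> 0" unfolding e_def using assms(4) by (simp add: inH_neg)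
  obtain Z where Zb: "\<And>S. finite S \<Longrightarrow> (\<Sum>n\<in>S. 1 / (1 + \<bar>real_of_int n\<bar>)\<^sup>2) \<le> Z"
    using zeta_bound by blast
  have Z0: "Z \<ge> 0" using Zb[of "{}"] by simp
  define CMv where "CMv = 2 ^ (m+1) * sqrt Z"
  have CMv0: "CMv \<ge> 0" by (simp add: CMv_def Z0)
  define a where "a = 4 ^ m * CMv"
  have a0: "a \<ge> 0" using CMv0 by (simp add: a_def)
  define \<delta>0 where "\<delta>0 = 1 / (8 * a + 1)"
  have p: "8 * a + 1 > 0" using a0 by linarith
  have dpos: "\<delta>0 > 0" using p by (simp add: \<delta>0_def)
  have dsmall: "4 ^ m * (2 ^ (m+1) * sqrt Z) * (2 * \<delta>0) \<le> 1/4"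
  proof -
    have "4 ^ m * (2 ^ (m+1) * sqrt Z) * (2 * \<delta>0) = (2 * a) / (8 * a + 1)"
      by (simp add: \<delta>0_def a_def CMv_def)
    also have "\<dots> \<le> 1/4" using p by (simp add: divide_le_eq)
    finally show ?thesis .
  qed
  obtain F0 where F0: "finite F0" and tl: "wn (wN True m) (\<lambda>k. W k - trunc F0 W k) \<le> \<delta>0"
    using tail_exists[OF wN_ge Wws dpos] by blast
  define L where "L = (\<Sum>k\<in>F0. cmod (W k))"
  have L0: "L \<ge> 0" by (simp add: L_def sum_nonneg)
  define \<mu> where "\<mu> = max 1 ((4 * 2 ^ m * L)\<^sup>2)"
  have mu1: "\<mu> \<ge> 1" by (simp add: \<mu>_def)
  have musmall: "2 ^ m / sqrt \<mu> * (\<Sum>k\<in>F0. cmod (W k)) \<le> 1/4"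
  proof (cases "L = 0")
    case True then show ?thesis by (simp add: L_def)
  next
    case False
    then have Lp: "L > 0" using L0 by simp
    have "4 * 2 ^ m * L = sqrt ((4 * 2 ^ m * L)\<^sup>2)" using L0 by simp
    also have "\<dots> \<le> sqrt \<mu>" by (rule real_sqrt_le_mono) (simp add: \<mu>_def)
    finally have s: "4 * 2 ^ m * L \<le> sqrt \<mu>" .
    have sp: "sqrt \<mu> > 0" using mu1 by simp
    have "2 ^ m / sqrt \<mu> * L = (2 ^ m * L) / sqrt \<mu>" by simp
    also have "\<dots> \<le> 1/4" using s sp by (simp add: divide_le_eq)
    finally show ?thesis by (simp add: L_def)
  qed
  interpret S: setting2 pl m W Z F0 \<delta>0 \<mu> lam
    by (unfold_locales; (fact m1 Wws F0 dsmall tl mu1 musmall assms(5) less_imp_le[OF dpos] Zb)?)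
  define K1 where "K1 = S.Mc * cmod S.\<nu> * S.\<kappa>"
  have K10: "K1 \<ge> 0" using S.Mc0 S.\<kappa>0 by (simp add: K1_def)
  define thr where "thr = min \<delta>0 (1 / (2 * K1 + 1))"
  have thr: "thr > 0" using dpos K10 by (simp add: thr_def)
  have ev: "\<forall>\<^sub>F n in sequentially. e n < thr"
    using e0 thr by (intro order_tendstoD) auto
  have good: "S.good (V n) \<and> K1 * e n \<le> 1/2" if en: "e n < thr" for n
  proof
    show "S.good (V n)" unfolding S.good_def using Vws[of n] en by (simp add: e_def thr_def)
    have en0: "e n \<ge> 0" by (simp add: e_def wn_ge0[OF wN_ge])
    have "K1 * e n \<le> K1 * (1 / (2 * K1 + 1))"
      using en K10 by (intro mult_left_mono) (simp_all add: thr_def)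
    also have "\<dots> \<le> 1/2" using K10 by (simp add: field_simps)
    finally show "K1 * e n \<le> 1/2" .
  qed
  have part1: "\<forall>\<^sub>F n in sequentially. lam \<in> resolvent_set pl m (V n)"
    using ev by eventually_elim (use good S.main_X(1) in \<open>auto simp: K1_def e_def\<close>)
  have up: "\<forall>\<^sub>F n in sequentially. opnorm_diff pl (resolvent pl m (V n) lam) (resolvent pl m W lam) \<le> S.Dc * e n"
    using ev
  proof eventually_elim
    case (elim n)
    have g: "S.good (V n)" "S.Mc * cmod S.\<nu> * S.\<kappa> * e n \<le> 1/2" using good[OF elim] by (auto simp: K1_def)
    show ?case
    proof (rule opnorm_bound(2))
      show "0 \<le> S.Dc * e n" using S.Dc0 by (simp add: e_def wn_ge0[OF wN_ge])
      fix f assume "ws w1 f"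
      then show "wn w1 (\<lambda>k. resolvent pl m (V n) lam f k - resolvent pl m W lam f k) \<le> S.Dc * e n * wn w1 f"
        using S.main_X(2)[OF g(1) _ \<open>ws w1 f\<close>] g(2) by (simp add: e_def)
    qed
  qed
  have low: "\<forall>\<^sub>F n in sequentially. 0 \<le> opnorm_diff pl (resolvent pl m (V n) lam) (resolvent pl m W lam)"
    using ev
  proof eventually_elim
    case (elim n)
    have g: "S.good (V n)" "S.Mc * cmod S.\<nu> * S.\<kappa> * e n \<le> 1/2" using good[OF elim] by (auto simp: K1_def)
    show ?case
    proof (rule opnorm_bound(1))
      show "0 \<le> S.Dc * e n" using S.Dc0 by (simp add: e_def wn_ge0[OF wN_ge])
      fix f assume "ws w1 f"
      then show "wn w1 (\<lambda>k. resolvent pl m (V n) lam f k - resolvent pl m W lam f k) \<le> S.Dc * e n * wn w1 f"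
        using S.main_X(2)[OF g(1) _ \<open>ws w1 f\<close>] g(2) by (simp add: e_def)
    qed
  qed
  have lim: "(\<lambda>n. S.Dc * e n) \<longlonglongrightarrow> 0" using tendsto_mult_right_zero[OF e0] by simp
  have part2: "(\<lambda>n. opnorm_diff pl (resolvent pl m (V n) lam) (resolvent pl m W lam)) \<longlonglongrightarrow> 0"
    by (rule tendsto_sandwich[OF low up tendsto_const lim])
  show ?thesis using part1 part2 by simp
qed


end
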